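(* Let $n\ge3$ and let $\Phi:\mathfrak{B}([n])^{op}\to\mathbf{Gpd}$ be a contravariant functor. The restriction functor $\gamma_{n-3}:\operatorname{2lim}_{\mathfrak{B}([n])}\Phi\to\operatorname{2lim}_{\mathfrak{B}([n],n-3)}\Phi$ is an equivalence of categories, where $\mathfrak{B}([n],n-3)$ is the poset of subsets $S\subseteq[n]$ with $n-3\le|S|\le n-1$.
   Context: $[n]=\{1,\dots,n\}$; $\mathfrak{B}([n])$ is the poset of proper subsets of $[n]$ ordered by inclusion. For $U\subseteq V$, $\Phi_{U,V}:\Phi(V)\to\Phi(U)$. For a functor $\Psi:I^{op}\to\mathbf{Gpd}$ on a poset, $\operatorname{2lim}\Psi$ is the groupoid whose objects are families $(a_U,\alpha_{U,V})$ with $a_U\in\Psi(U)$ and isomorphisms $\alpha_{U,V}:\Psi_{U,V}(a_V)\to a_U$ for $U\le V$ satisfying $\alpha_{U,U}=\mathrm{id}$ and $\alpha_{U,W}=\alpha_{U,V}\circ\Psi_{U,V}(\alpha_{V,W})$, and whose morphisms are families $g_U:a_U\to b_U$ with $g_U\circ\alpha_{U,V}=\beta_{U,V}\circ\Psi_{U,V}(g_V)$. *)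

theory Defs
  imports Main
begin

record ('o,'m) cat =
  Ob  :: "'o set"
  Ar  :: "'m set"
  Dom :: "'m \<Rightarrow> 'o"
  Cod :: "'m \<Rightarrow> 'o"
  Cmp :: "'m \<Rightarrow> 'm \<Rightarrow> 'm"   (* Cmp g f = g o f *)
  Idm :: "'o \<Rightarrow> 'm"

definition category :: "('o,'m) cat \<Rightarrow> bool" where
  "category C \<longleftrightarrow>
     (\<forall>f\<in>Ar C. Dom C f \<in> Ob C \<and> Cod C f \<in> Ob C)
   \<and> (\<forall>x\<in>Ob C. Idm C x \<in> Ar C \<and> Dom C (Idm C x) = x \<and> Cod C (Idm C x) = x)
   \<and> (\<forall>f\<in>Ar C. \<forall>g\<in>Ar C. Cod C f = Dom C g \<longrightarrow>
        Cmp C g f \<in> Ar C \<and> Dom C (Cmp C g f) = Dom C f \<and> Cod C (Cmp C g f) = Cod C g)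
   \<and> (\<forall>f\<in>Ar C. \<forall>g\<in>Ar C. \<forall>h\<in>Ar C. Cod C f = Dom C g \<longrightarrow> Cod C g = Dom C h \<longrightarrow>
        Cmp C h (Cmp C g f) = Cmp C (Cmp C h g) f)
   \<and> (\<forall>f\<in>Ar C. Cmp C (Idm C (Cod C f)) f = f \<and> Cmp C f (Idm C (Dom C f)) = f)"

definition iso_arr :: "('o,'m) cat \<Rightarrow> 'm \<Rightarrow> bool" where
  "iso_arr C f \<longleftrightarrow> f \<in> Ar C \<and> (\<exists>g\<in>Ar C. Dom C g = Cod C f \<and> Cod C g = Dom C f
      \<and> Cmp C g f = Idm C (Dom C f) \<and> Cmp C f g = Idm C (Cod C f))"

definition groupoid :: "('o,'m) cat \<Rightarrow> bool" where
  "groupoid C \<longleftrightarrow> category C \<and> (\<forall>f\<in>Ar C. iso_arr C f)"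

type_synonym ('o,'m,'p,'n) ftor = "('o \<Rightarrow> 'p) \<times> ('m \<Rightarrow> 'n)"

definition is_functor :: "('o,'m) cat \<Rightarrow> ('p,'n) cat \<Rightarrow> ('o,'m,'p,'n) ftor \<Rightarrow> bool" where
  "is_functor C D F \<longleftrightarrow> category C \<and> category D
   \<and> (\<forall>x\<in>Ob C. fst F x \<in> Ob D)
   \<and> (\<forall>f\<in>Ar C. snd F f \<in> Ar D \<and> Dom D (snd F f) = fst F (Dom C f)
                                 \<and> Cod D (snd F f) = fst F (Cod C f))
   \<and> (\<forall>f\<in>Ar C. \<forall>g\<in>Ar C. Cod C f = Dom C g \<longrightarrow>
        snd F (Cmp C g f) = Cmp D (snd F g) (snd F f))
   \<and> (\<forall>x\<in>Ob C. snd F (Idm C x) = Idm D (fst F x))"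

definition id_ftor :: "('o,'m,'o,'m) ftor" where
  "id_ftor = (\<lambda>x. x, \<lambda>f. f)"

definition comp_ftor :: "('p,'n,'q,'k) ftor \<Rightarrow> ('o,'m,'p,'n) ftor \<Rightarrow> ('o,'m,'q,'k) ftor" where
  "comp_ftor G F = (fst G \<circ> fst F, snd G \<circ> snd F)"

definition ftor_eq :: "('o,'m) cat \<Rightarrow> ('o,'m,'p,'n) ftor \<Rightarrow> ('o,'m,'p,'n) ftor \<Rightarrow> bool" where
  "ftor_eq C F G \<longleftrightarrow> (\<forall>x\<in>Ob C. fst F x = fst G x) \<and> (\<forall>f\<in>Ar C. snd F f = snd G f)"

definition nat_iso :: "('o,'m) cat \<Rightarrow> ('p,'n) cat \<Rightarrow> ('o,'m,'p,'n) ftor \<Rightarrow> ('o,'m,'p,'n) ftor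
                       \<Rightarrow> ('o \<Rightarrow> 'n) \<Rightarrow> bool" where
  "nat_iso C D F G eta \<longleftrightarrow> is_functor C D F \<and> is_functor C D G
   \<and> (\<forall>x\<in>Ob C. iso_arr D (eta x) \<and> Dom D (eta x) = fst F x \<and> Cod D (eta x) = fst G x)
   \<and> (\<forall>f\<in>Ar C. Cmp D (eta (Cod C f)) (snd F f) = Cmp D (snd G f) (eta (Dom C f)))"

definition cat_equivalence :: "('o,'m) cat \<Rightarrow> ('p,'n) cat \<Rightarrow> ('o,'m,'p,'n) ftor \<Rightarrow> bool" where
  "cat_equivalence C D F \<longleftrightarrow> is_functor C D F \<and>
     (\<exists>G :: ('p,'n,'o,'m) ftor. is_functor D C G
        \<and> (\<exists>eta. nat_iso C C id_ftor (comp_ftor G F) eta)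
        \<and> (\<exists>eps. nat_iso D D (comp_ftor F G) id_ftor eps))"

text \<open>Phi U is the groupoid at U; PhiR U V = Phi_{U,V} : Phi V -> Phi U for U <= V.\<close>
definition contra_gpd_functor ::
  "nat set set \<Rightarrow> (nat set \<Rightarrow> ('o,'m) cat) \<Rightarrow> (nat set \<Rightarrow> nat set \<Rightarrow> ('o,'m,'o,'m) ftor) \<Rightarrow> bool" where
  "contra_gpd_functor P Phi PhiR \<longleftrightarrow>
     (\<forall>U\<in>P. groupoid (Phi U))
   \<and> (\<forall>U\<in>P. \<forall>V\<in>P. U \<subseteq> V \<longrightarrow> is_functor (Phi V) (Phi U) (PhiR U V))
   \<and> (\<forall>U\<in>P. ftor_eq (Phi U) (PhiR U U) id_ftor)
   \<and> (\<forall>U\<in>P. \<forall>V\<in>P. \<forall>W\<in>P. U \<subseteq> V \<longrightarrow> V \<subseteq> W \<longrightarrow>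
        ftor_eq (Phi W) (PhiR U W) (comp_ftor (PhiR U V) (PhiR V W)))"

type_synonym ('o,'m) lobj = "(nat set \<Rightarrow> 'o) \<times> (nat set \<Rightarrow> nat set \<Rightarrow> 'm)"
type_synonym ('o,'m) larr = "('o,'m) lobj \<times> ('o,'m) lobj \<times> (nat set \<Rightarrow> 'm)"

definition lim_obj ::
  "nat set set \<Rightarrow> (nat set \<Rightarrow> ('o,'m) cat) \<Rightarrow> (nat set \<Rightarrow> nat set \<Rightarrow> ('o,'m,'o,'m) ftor)
   \<Rightarrow> ('o,'m) lobj \<Rightarrow> bool" where
  "lim_obj P Phi PhiR x \<longleftrightarrow> (case x of (a, \<alpha>) \<Rightarrow>
      (\<forall>U\<in>P. a U \<in> Ob (Phi U))
    \<and> (\<forall>U\<in>P. \<forall>V\<in>P. U \<subseteq> V \<longrightarrow> \<alpha> U V \<in> Ar (Phi U)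
          \<and> Dom (Phi U) (\<alpha> U V) = fst (PhiR U V) (a V) \<and> Cod (Phi U) (\<alpha> U V) = a U)
    \<and> (\<forall>U\<in>P. \<alpha> U U = Idm (Phi U) (a U))
    \<and> (\<forall>U\<in>P. \<forall>V\<in>P. \<forall>W\<in>P. U \<subseteq> V \<longrightarrow> V \<subseteq> W \<longrightarrow>
          \<alpha> U W = Cmp (Phi U) (\<alpha> U V) (snd (PhiR U V) (\<alpha> V W)))
    \<and> (\<forall>U. U \<notin> P \<longrightarrow> a U = undefined)
    \<and> (\<forall>U V. \<not> (U \<in> P \<and> V \<in> P \<and> U \<subseteq> V) \<longrightarrow> \<alpha> U V = undefined))"

definition lim_arr ::
  "nat set set \<Rightarrow> (nat set \<Rightarrow> ('o,'m) cat) \<Rightarrow> (nat set \<Rightarrow> nat set \<Rightarrow> ('o,'m,'o,'m) ftor)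
   \<Rightarrow> ('o,'m) larr \<Rightarrow> bool" where
  "lim_arr P Phi PhiR f \<longleftrightarrow> (case f of ((a, \<alpha>), (b, \<beta>), g) \<Rightarrow>
      lim_obj P Phi PhiR (a, \<alpha>) \<and> lim_obj P Phi PhiR (b, \<beta>)
    \<and> (\<forall>U\<in>P. g U \<in> Ar (Phi U) \<and> Dom (Phi U) (g U) = a U \<and> Cod (Phi U) (g U) = b U)
    \<and> (\<forall>U\<in>P. \<forall>V\<in>P. U \<subseteq> V \<longrightarrow>
          Cmp (Phi U) (g U) (\<alpha> U V) = Cmp (Phi U) (\<beta> U V) (snd (PhiR U V) (g V)))
    \<and> (\<forall>U. U \<notin> P \<longrightarrow> g U = undefined))"

definition twolim ::
  "nat set set \<Rightarrow> (nat set \<Rightarrow> ('o,'m) cat) \<Rightarrow> (nat set \<Rightarrow> nat set \<Rightarrow> ('o,'m,'o,'m) ftor)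
   \<Rightarrow> (('o,'m) lobj, ('o,'m) larr) cat" where
  "twolim P Phi PhiR =
     \<lparr> Ob = {x. lim_obj P Phi PhiR x},
       Ar = {f. lim_arr P Phi PhiR f},
       Dom = (\<lambda>f. fst f),
       Cod = (\<lambda>f. fst (snd f)),
       Cmp = (\<lambda>k f. (fst f, fst (snd k),
                      \<lambda>U. if U \<in> P then Cmp (Phi U) (snd (snd k) U) (snd (snd f) U) else undefined)),
       Idm = (\<lambda>x. (x, x, \<lambda>U. if U \<in> P then Idm (Phi U) (fst x U) else undefined)) \<rparr>"

definition restr_obj :: "nat set set \<Rightarrow> ('o,'m) lobj \<Rightarrow> ('o,'m) lobj" where
  "restr_obj Q x = (\<lambda>U. if U \<in> Q then fst x U else undefined,
                    \<lambda>U V. if U \<in> Q \<and> V \<in> Q \<and> U \<subseteq> V then snd x U V else undefined)"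

definition restr_ftor :: "nat set set \<Rightarrow> (('o,'m) lobj, ('o,'m) larr, ('o,'m) lobj, ('o,'m) larr) ftor" where
  "restr_ftor Q = (restr_obj Q,
     \<lambda>f. (restr_obj Q (fst f), restr_obj Q (fst (snd f)),
          \<lambda>U. if U \<in> Q then snd (snd f) U else undefined))"

definition Bn :: "nat \<Rightarrow> nat set set" where
  "Bn n = {S. S \<subset> {1..n}}"

definition Bnk :: "nat \<Rightarrow> nat \<Rightarrow> nat set set" where
  "Bnk n k = {S. S \<subseteq> {1..n} \<and> k \<le> card S \<and> card S \<le> n - 1}"

end

theory Submission
  imports Defs
begin

definition arr :: "('o,'m) cat \<Rightarrow> 'm \<Rightarrow> 'o \<Rightarrow> 'o \<Rightarrow> bool" where
  "arr C f a b \<longleftrightarrow> f \<in> Ar C \<and> Dom C f = a \<and> Cod C f = b"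

lemma arrI: "f \<in> Ar C \<Longrightarrow> arr C f (Dom C f) (Cod C f)"
  by (simp add: arr_def)

lemma cat_ob: "category C \<Longrightarrow> arr C f a b \<Longrightarrow> a \<in> Ob C \<and> b \<in> Ob C"
  unfolding category_def arr_def by blast

lemma cat_comp: "category C \<Longrightarrow> arr C f a b \<Longrightarrow> arr C g b c \<Longrightarrow> arr C (Cmp C g f) a c"
  unfolding category_def arr_def by metis

lemma cat_assoc: "category C \<Longrightarrow> arr C f a b \<Longrightarrow> arr C g b c \<Longrightarrow> arr C h c d \<Longrightarrow>
   Cmp C h (Cmp C g f) = Cmp C (Cmp C h g) f"
  unfolding category_def arr_def by metis

lemma cat_id: "category C \<Longrightarrow> a \<in> Ob C \<Longrightarrow> arr C (Idm C a) a a"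
  unfolding category_def arr_def by metis

lemma cat_idl: "category C \<Longrightarrow> arr C f a b \<Longrightarrow> Cmp C (Idm C b) f = f"
  unfolding category_def arr_def by metis

lemma cat_idr: "category C \<Longrightarrow> arr C f a b \<Longrightarrow> Cmp C f (Idm C a) = f"
  unfolding category_def arr_def by metis

definition ginv :: "('o,'m) cat \<Rightarrow> 'm \<Rightarrow> 'm" where
  "ginv C f = (SOME g. arr C g (Cod C f) (Dom C f) \<and> Cmp C g f = Idm C (Dom C f) \<and> Cmp C f g = Idm C (Cod C f))"

lemma ginv: assumes "groupoid C" "arr C f a b"
  shows "arr C (ginv C f) b a \<and> Cmp C (ginv C f) f = Idm C a \<and> Cmp C f (ginv C f) = Idm C b"
proof -
  have "iso_arr C f" using assms unfolding groupoid_def arr_def by blast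
  then have "\<exists>g. arr C g (Cod C f) (Dom C f) \<and> Cmp C g f = Idm C (Dom C f) \<and> Cmp C f g = Idm C (Cod C f)"
    unfolding iso_arr_def arr_def by blast
  from someI_ex[OF this] show ?thesis using assms(2) unfolding ginv_def arr_def by blast
qed

lemma gpd_cat: "groupoid C \<Longrightarrow> category C"
  by (simp add: groupoid_def)

lemma cancel_r: assumes "groupoid C" "arr C f a b" "arr C g b c" "arr C h b c" "Cmp C g f = Cmp C h f"
  shows "g = h"
proof -
  have c: "category C" using assms(1) gpd_cat by blast
  note i = ginv[OF assms(1,2)]
  have "g = Cmp C g (Cmp C f (ginv C f))" using i cat_idr[OF c assms(3)] by simp
  also have "\<dots> = Cmp C (Cmp C g f) (ginv C f)" using cat_assoc[OF c _ assms(2,3)] i by blast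
  also have "\<dots> = Cmp C (Cmp C h f) (ginv C f)" using assms(5) by simp
  also have "\<dots> = Cmp C h (Cmp C f (ginv C f))" using cat_assoc[OF c _ assms(2,4)] i by metis
  also have "\<dots> = h" using i cat_idr[OF c assms(4)] by simp
  finally show ?thesis .
qed

lemma cancel_l: assumes "groupoid C" "arr C f b c" "arr C g a b" "arr C h a b" "Cmp C f g = Cmp C f h"
  shows "g = h"
proof -
  have c: "category C" using assms(1) gpd_cat by blast
  note i = ginv[OF assms(1,2)]
  have "g = Cmp C (Cmp C (ginv C f) f) g" using i cat_idl[OF c assms(3)] by simp
  also have "\<dots> = Cmp C (ginv C f) (Cmp C f g)" using cat_assoc[OF c assms(3,2)] i by metis
  also have "\<dots> = Cmp C (ginv C f) (Cmp C f h)" using assms(5) by simp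
  also have "\<dots> = Cmp C (Cmp C (ginv C f) f) h" using cat_assoc[OF c assms(4,2)] i by metis
  also have "\<dots> = h" using i cat_idl[OF c assms(4)] by simp
  finally show ?thesis .
qed

lemma fun_ob: "is_functor C D F \<Longrightarrow> a \<in> Ob C \<Longrightarrow> fst F a \<in> Ob D"
  unfolding is_functor_def by blast

lemma fun_arr: "is_functor C D F \<Longrightarrow> arr C f a b \<Longrightarrow> arr D (snd F f) (fst F a) (fst F b)"
  unfolding is_functor_def arr_def by blast

lemma fun_comp: "is_functor C D F \<Longrightarrow> arr C f a b \<Longrightarrow> arr C g b c \<Longrightarrow>
   snd F (Cmp C g f) = Cmp D (snd F g) (snd F f)"
  unfolding is_functor_def arr_def by metis

lemma fun_id: "is_functor C D F \<Longrightarrow> a \<in> Ob C \<Longrightarrow> snd F (Idm C a) = Idm D (fst F a)"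
  unfolding is_functor_def by blast

lemma fun_cats: "is_functor C D F \<Longrightarrow> category C \<and> category D"
  unfolding is_functor_def by blast

lemma id_ftor_functor: "category C \<Longrightarrow> is_functor C C id_ftor"
  unfolding is_functor_def id_ftor_def category_def by auto

lemma comp_ftor_functor: "is_functor C D F \<Longrightarrow> is_functor D E G \<Longrightarrow> is_functor C E (comp_ftor G F)"
  unfolding is_functor_def comp_ftor_def by (auto; metis)


locale cgf =
  fixes R :: "nat set set" and Phi :: "nat set \<Rightarrow> ('o,'m) cat"
    and PhiR :: "nat set \<Rightarrow> nat set \<Rightarrow> ('o,'m,'o,'m) ftor"
  assumes cgf: "contra_gpd_functor R Phi PhiR"
begin

lemmas cgfu = cgf[unfolded contra_gpd_functor_def]
lemma gpd: "U \<in> R \<Longrightarrow> groupoid (Phi U)"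
  using cgfu[THEN conjunct1] by blast
lemma cat: "U \<in> R \<Longrightarrow> category (Phi U)"
  using gpd gpd_cat by blast
lemma rfun: "U \<in> R \<Longrightarrow> V \<in> R \<Longrightarrow> U \<subseteq> V \<Longrightarrow> is_functor (Phi V) (Phi U) (PhiR U V)"
  using cgfu[THEN conjunct2, THEN conjunct1] by blast
lemma fid: "U \<in> R \<Longrightarrow> ftor_eq (Phi U) (PhiR U U) id_ftor"
  using cgfu[THEN conjunct2, THEN conjunct2, THEN conjunct1] by blast
lemma fcomp: "U \<in> R \<Longrightarrow> V \<in> R \<Longrightarrow> W \<in> R \<Longrightarrow> U \<subseteq> V \<Longrightarrow> V \<subseteq> W \<Longrightarrow>
   ftor_eq (Phi W) (PhiR U W) (comp_ftor (PhiR U V) (PhiR V W))"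
  using cgfu[THEN conjunct2, THEN conjunct2, THEN conjunct2] by blast
lemma idob: "U \<in> R \<Longrightarrow> a \<in> Ob (Phi U) \<Longrightarrow> fst (PhiR U U) a = a"
  using fid unfolding ftor_eq_def id_ftor_def by simp
lemma idar: "U \<in> R \<Longrightarrow> arr (Phi U) f a b \<Longrightarrow> snd (PhiR U U) f = f"
  using fid unfolding ftor_eq_def id_ftor_def arr_def by simp
lemma compob: assumes "U \<in> R" "V \<in> R" "W \<in> R" "U \<subseteq> V" "V \<subseteq> W" "a \<in> Ob (Phi W)"
  shows "fst (PhiR U W) a = fst (PhiR U V) (fst (PhiR V W) a)"
proof -
  have "\<forall>x\<in>Ob (Phi W). fst (PhiR U W) x = fst (PhiR U V) (fst (PhiR V W) x)"
    using fcomp[OF assms(1-5)] unfolding ftor_eq_def comp_ftor_def by simp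
  then show ?thesis using assms(6) by blast
qed
lemma comparr: assumes "U \<in> R" "V \<in> R" "W \<in> R" "U \<subseteq> V" "V \<subseteq> W" "arr (Phi W) f a b"
  shows "snd (PhiR U W) f = snd (PhiR U V) (snd (PhiR V W) f)"
proof -
  have "\<forall>x\<in>Ar (Phi W). snd (PhiR U W) x = snd (PhiR U V) (snd (PhiR V W) x)"
    using fcomp[OF assms(1-5)] unfolding ftor_eq_def comp_ftor_def by simp
  then show ?thesis using assms(6) unfolding arr_def by blast
qed

abbreviation "T \<equiv> twolim R Phi PhiR"

lemma lo_iff: "lim_obj R Phi PhiR x \<longleftrightarrow>
      (\<forall>U\<in>R. fst x U \<in> Ob (Phi U))
    \<and> (\<forall>U\<in>R. \<forall>V\<in>R. U \<subseteq> V \<longrightarrow> arr (Phi U) (snd x U V) (fst (PhiR U V) (fst x V)) (fst x U))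
    \<and> (\<forall>U\<in>R. snd x U U = Idm (Phi U) (fst x U))
    \<and> (\<forall>U\<in>R. \<forall>V\<in>R. \<forall>W\<in>R. U \<subseteq> V \<longrightarrow> V \<subseteq> W \<longrightarrow>
          snd x U W = Cmp (Phi U) (snd x U V) (snd (PhiR U V) (snd x V W)))
    \<and> (\<forall>U. U \<notin> R \<longrightarrow> fst x U = undefined)
    \<and> (\<forall>U V. \<not> (U \<in> R \<and> V \<in> R \<and> U \<subseteq> V) \<longrightarrow> snd x U V = undefined)"
  by (cases x) (simp add: lim_obj_def arr_def)

lemma la_iff: "lim_arr R Phi PhiR f \<longleftrightarrow>
      lim_obj R Phi PhiR (fst f) \<and> lim_obj R Phi PhiR (fst (snd f))
    \<and> (\<forall>U\<in>R. arr (Phi U) (snd (snd f) U) (fst (fst f) U) (fst (fst (snd f)) U))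
    \<and> (\<forall>U\<in>R. \<forall>V\<in>R. U \<subseteq> V \<longrightarrow>
          Cmp (Phi U) (snd (snd f) U) (snd (fst f) U V) = Cmp (Phi U) (snd (fst (snd f)) U V) (snd (PhiR U V) (snd (snd f) V)))
    \<and> (\<forall>U. U \<notin> R \<longrightarrow> snd (snd f) U = undefined)"
  by (cases f) (auto simp add: lim_arr_def arr_def split: prod.splits)

lemmas loD = lo_iff[THEN iffD1]
lemma lo_ob: "lim_obj R Phi PhiR x \<Longrightarrow> U \<in> R \<Longrightarrow> fst x U \<in> Ob (Phi U)"
  using loD[THEN conjunct1] by blast
lemma lo_arr: "lim_obj R Phi PhiR x \<Longrightarrow> U \<in> R \<Longrightarrow> V \<in> R \<Longrightarrow> U \<subseteq> V \<Longrightarrow>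
   arr (Phi U) (snd x U V) (fst (PhiR U V) (fst x V)) (fst x U)"
  using loD[THEN conjunct2, THEN conjunct1] by blast
lemma lo_id: "lim_obj R Phi PhiR x \<Longrightarrow> U \<in> R \<Longrightarrow> snd x U U = Idm (Phi U) (fst x U)"
  using loD[THEN conjunct2, THEN conjunct2, THEN conjunct1] by blast
lemma lo_coc: "lim_obj R Phi PhiR x \<Longrightarrow> U \<in> R \<Longrightarrow> V \<in> R \<Longrightarrow> W \<in> R \<Longrightarrow> U \<subseteq> V \<Longrightarrow> V \<subseteq> W \<Longrightarrow>
   snd x U W = Cmp (Phi U) (snd x U V) (snd (PhiR U V) (snd x V W))"
  using loD[THEN conjunct2, THEN conjunct2, THEN conjunct2, THEN conjunct1] by blast
lemma lo_u1: "lim_obj R Phi PhiR x \<Longrightarrow> U \<notin> R \<Longrightarrow> fst x U = undefined"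
  using loD[THEN conjunct2, THEN conjunct2, THEN conjunct2, THEN conjunct2, THEN conjunct1] by blast
lemma lo_u2: "lim_obj R Phi PhiR x \<Longrightarrow> \<not> (U \<in> R \<and> V \<in> R \<and> U \<subseteq> V) \<Longrightarrow> snd x U V = undefined"
  using loD[THEN conjunct2, THEN conjunct2, THEN conjunct2, THEN conjunct2, THEN conjunct2] by blast

lemmas laD = la_iff[THEN iffD1]
lemma la_o1: "lim_arr R Phi PhiR f \<Longrightarrow> lim_obj R Phi PhiR (fst f)"
  using laD[THEN conjunct1] by blast
lemma la_o2: "lim_arr R Phi PhiR f \<Longrightarrow> lim_obj R Phi PhiR (fst (snd f))"
  using laD[THEN conjunct2, THEN conjunct1] by blast
lemma la_arr: "lim_arr R Phi PhiR f \<Longrightarrow> U \<in> R \<Longrightarrow> arr (Phi U) (snd (snd f) U) (fst (fst f) U) (fst (fst (snd f)) U)"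
  using laD[THEN conjunct2, THEN conjunct2, THEN conjunct1] by blast
lemma la_nat: "lim_arr R Phi PhiR f \<Longrightarrow> U \<in> R \<Longrightarrow> V \<in> R \<Longrightarrow> U \<subseteq> V \<Longrightarrow>
   Cmp (Phi U) (snd (snd f) U) (snd (fst f) U V) = Cmp (Phi U) (snd (fst (snd f)) U V) (snd (PhiR U V) (snd (snd f) V))"
  using laD[THEN conjunct2, THEN conjunct2, THEN conjunct2, THEN conjunct1] by blast
lemma la_u: "lim_arr R Phi PhiR f \<Longrightarrow> U \<notin> R \<Longrightarrow> snd (snd f) U = undefined"
  using laD[THEN conjunct2, THEN conjunct2, THEN conjunct2, THEN conjunct2] by blast

lemma laI: "lim_obj R Phi PhiR (fst f) \<Longrightarrow> lim_obj R Phi PhiR (fst (snd f))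
    \<Longrightarrow> (\<And>U. U\<in>R \<Longrightarrow> arr (Phi U) (snd (snd f) U) (fst (fst f) U) (fst (fst (snd f)) U))
    \<Longrightarrow> (\<And>U V. U\<in>R \<Longrightarrow> V\<in>R \<Longrightarrow> U \<subseteq> V \<Longrightarrow>
          Cmp (Phi U) (snd (snd f) U) (snd (fst f) U V) = Cmp (Phi U) (snd (fst (snd f)) U V) (snd (PhiR U V) (snd (snd f) V)))
    \<Longrightarrow> (\<And>U. U \<notin> R \<Longrightarrow> snd (snd f) U = undefined) \<Longrightarrow> lim_arr R Phi PhiR f"
  unfolding la_iff by blast

lemma loI: "(\<And>U. U\<in>R \<Longrightarrow> fst x U \<in> Ob (Phi U))
    \<Longrightarrow> (\<And>U V. U\<in>R \<Longrightarrow> V\<in>R \<Longrightarrow> U \<subseteq> V \<Longrightarrow> arr (Phi U) (snd x U V) (fst (PhiR U V) (fst x V)) (fst x U))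
    \<Longrightarrow> (\<And>U. U\<in>R \<Longrightarrow> snd x U U = Idm (Phi U) (fst x U))
    \<Longrightarrow> (\<And>U V W. U\<in>R \<Longrightarrow> V\<in>R \<Longrightarrow> W\<in>R \<Longrightarrow> U \<subseteq> V \<Longrightarrow> V \<subseteq> W \<Longrightarrow>
          snd x U W = Cmp (Phi U) (snd x U V) (snd (PhiR U V) (snd x V W)))
    \<Longrightarrow> (\<And>U. U \<notin> R \<Longrightarrow> fst x U = undefined)
    \<Longrightarrow> (\<And>U V. \<not> (U \<in> R \<and> V \<in> R \<and> U \<subseteq> V) \<Longrightarrow> snd x U V = undefined)
    \<Longrightarrow> lim_obj R Phi PhiR x"
  unfolding lo_iff by blast

lemma T_simps: "Ob T = {x. lim_obj R Phi PhiR x}" "Ar T = {f. lim_arr R Phi PhiR f}"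
  "Dom T f = fst f" "Cod T f = fst (snd f)"
  "Cmp T k f = (fst f, fst (snd k), \<lambda>U. if U \<in> R then Cmp (Phi U) (snd (snd k) U) (snd (snd f) U) else undefined)"
  "Idm T x = (x, x, \<lambda>U. if U \<in> R then Idm (Phi U) (fst x U) else undefined)"
  by (simp_all add: twolim_def)

lemma T_comp_closed:
  assumes f: "lim_arr R Phi PhiR f" and g: "lim_arr R Phi PhiR g" and e: "fst (snd f) = fst g"
  shows "lim_arr R Phi PhiR (Cmp T g f)"
proof -
  obtain x y p where fx: "f = (x, y, p)" by (cases f) auto
  obtain z q where gx: "g = (y, z, q)" using e fx by (cases g) auto
  have x: "lim_obj R Phi PhiR x" and y: "lim_obj R Phi PhiR y" and z: "lim_obj R Phi PhiR z"
    using la_o1[OF f] la_o2[OF f] la_o2[OF g] fx gx by auto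
  have pa: "\<And>U. U\<in>R \<Longrightarrow> arr (Phi U) (p U) (fst x U) (fst y U)"
    using la_arr[OF f] fx by auto
  have qa: "\<And>U. U\<in>R \<Longrightarrow> arr (Phi U) (q U) (fst y U) (fst z U)"
    using la_arr[OF g] gx by auto
  have pn: "\<And>U V. U\<in>R \<Longrightarrow> V\<in>R \<Longrightarrow> U \<subseteq> V \<Longrightarrow> Cmp (Phi U) (p U) (snd x U V) = Cmp (Phi U) (snd y U V) (snd (PhiR U V) (p V))"
    using la_nat[OF f] fx by auto
  have qn: "\<And>U V. U\<in>R \<Longrightarrow> V\<in>R \<Longrightarrow> U \<subseteq> V \<Longrightarrow> Cmp (Phi U) (q U) (snd y U V) = Cmp (Phi U) (snd z U V) (snd (PhiR U V) (q V))"
    using la_nat[OF g] gx by auto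
  have nat: "Cmp (Phi U) (Cmp (Phi U) (q U) (p U)) (snd x U V) =
        Cmp (Phi U) (snd z U V) (snd (PhiR U V) (Cmp (Phi V) (q V) (p V)))"
    if U: "U \<in> R" "V \<in> R" "U \<subseteq> V" for U V
  proof -
    have c: "category (Phi U)" using cat U by blast
    have fu: "is_functor (Phi V) (Phi U) (PhiR U V)" using rfun U by blast
    have pV: "arr (Phi V) (p V) (fst x V) (fst y V)" and qV: "arr (Phi V) (q V) (fst y V) (fst z V)"
      using pa qa U by auto
    have pU: "arr (Phi U) (p U) (fst x U) (fst y U)" and qU: "arr (Phi U) (q U) (fst y U) (fst z U)"
      using pa qa U by auto
    have Pp: "arr (Phi U) (snd (PhiR U V) (p V)) (fst (PhiR U V) (fst x V)) (fst (PhiR U V) (fst y V))"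
      using fun_arr[OF fu pV] .
    have Pq: "arr (Phi U) (snd (PhiR U V) (q V)) (fst (PhiR U V) (fst y V)) (fst (PhiR U V) (fst z V))"
      using fun_arr[OF fu qV] .
    have axU: "arr (Phi U) (snd x U V) (fst (PhiR U V) (fst x V)) (fst x U)" using lo_arr[OF x U] .
    have ayU: "arr (Phi U) (snd y U V) (fst (PhiR U V) (fst y V)) (fst y U)" using lo_arr[OF y U] .
    have azU: "arr (Phi U) (snd z U V) (fst (PhiR U V) (fst z V)) (fst z U)" using lo_arr[OF z U] .
    have "Cmp (Phi U) (Cmp (Phi U) (q U) (p U)) (snd x U V) = Cmp (Phi U) (q U) (Cmp (Phi U) (p U) (snd x U V))"
      using cat_assoc[OF c axU pU qU] by simp
    also have "\<dots> = Cmp (Phi U) (q U) (Cmp (Phi U) (snd y U V) (snd (PhiR U V) (p V)))"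
      using pn U by simp
    also have "\<dots> = Cmp (Phi U) (Cmp (Phi U) (q U) (snd y U V)) (snd (PhiR U V) (p V))"
      using cat_assoc[OF c Pp ayU qU] by simp
    also have "\<dots> = Cmp (Phi U) (Cmp (Phi U) (snd z U V) (snd (PhiR U V) (q V))) (snd (PhiR U V) (p V))"
      using qn U by simp
    also have "\<dots> = Cmp (Phi U) (snd z U V) (Cmp (Phi U) (snd (PhiR U V) (q V)) (snd (PhiR U V) (p V)))"
      using cat_assoc[OF c Pp Pq azU] by simp
    also have "\<dots> = Cmp (Phi U) (snd z U V) (snd (PhiR U V) (Cmp (Phi V) (q V) (p V)))"
      using fun_comp[OF fu pV qV] by simp
    finally show ?thesis .
  qed
  have ca: "arr (Phi U) (Cmp (Phi U) (q U) (p U)) (fst x U) (fst z U)" if "U\<in>R" for U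
    using cat_comp[OF cat[OF that] pa[OF that] qa[OF that]] .
  show ?thesis
    by (rule laI) (auto simp: fx gx T_simps x z nat ca)
qed

lemma T_id_arr: assumes x: "lim_obj R Phi PhiR x" shows "lim_arr R Phi PhiR (Idm T x)"
proof -
  have "Cmp (Phi U) (Idm (Phi U) (fst x U)) (snd x U V) = Cmp (Phi U) (snd x U V) (snd (PhiR U V) (Idm (Phi V) (fst x V)))"
    if U: "U \<in> R" "V \<in> R" "U \<subseteq> V" for U V
  proof -
    have "Cmp (Phi U) (Idm (Phi U) (fst x U)) (snd x U V) = snd x U V"
      using cat_idl[OF cat lo_arr[OF x U]] U by simp
    also have "\<dots> = Cmp (Phi U) (snd x U V) (Idm (Phi U) (fst (PhiR U V) (fst x V)))"
      using cat_idr[OF cat lo_arr[OF x U]] U by simp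
    also have "\<dots> = Cmp (Phi U) (snd x U V) (snd (PhiR U V) (Idm (Phi V) (fst x V)))"
      using fun_id[OF rfun[OF U] lo_ob[OF x U(2)]] by simp
    finally show ?thesis .
  qed
  then show ?thesis
    by (intro laI) (auto simp: T_simps x intro: cat_id[OF cat lo_ob[OF x]])
qed

lemma T_category: "category T"
proof -
  have A: "\<forall>f\<in>Ar T. Dom T f \<in> Ob T \<and> Cod T f \<in> Ob T"
    unfolding T_simps using la_o1 la_o2 by auto
  have B: "\<forall>x\<in>Ob T. Idm T x \<in> Ar T \<and> Dom T (Idm T x) = x \<and> Cod T (Idm T x) = x"
    using T_id_arr unfolding T_simps by auto
  have C: "\<forall>f\<in>Ar T. \<forall>g\<in>Ar T. Cod T f = Dom T g \<longrightarrow>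
        Cmp T g f \<in> Ar T \<and> Dom T (Cmp T g f) = Dom T f \<and> Cod T (Cmp T g f) = Cod T g"
    using T_comp_closed by (simp add: T_simps)
  have D: "Cmp T h (Cmp T g f) = Cmp T (Cmp T h g) f"
    if "f \<in> Ar T" "g \<in> Ar T" "h \<in> Ar T" "Cod T f = Dom T g" "Cod T g = Dom T h" for f g h
  proof -
    have "Cmp (Phi U) (snd (snd h) U) (Cmp (Phi U) (snd (snd g) U) (snd (snd f) U)) =
          Cmp (Phi U) (Cmp (Phi U) (snd (snd h) U) (snd (snd g) U)) (snd (snd f) U)" if U: "U \<in> R" for U
    proof -
      have a1: "arr (Phi U) (snd (snd f) U) (fst (fst f) U) (fst (fst (snd f)) U)"
        using la_arr \<open>f \<in> Ar T\<close> U unfolding T_simps by auto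
      have a2: "arr (Phi U) (snd (snd g) U) (fst (fst (snd f)) U) (fst (fst (snd g)) U)"
        using la_arr \<open>g \<in> Ar T\<close> U \<open>Cod T f = Dom T g\<close> unfolding T_simps by auto
      have a3: "arr (Phi U) (snd (snd h) U) (fst (fst (snd g)) U) (fst (fst (snd h)) U)"
        using la_arr \<open>h \<in> Ar T\<close> U \<open>Cod T g = Dom T h\<close> unfolding T_simps by auto
      show ?thesis using cat_assoc[OF cat[OF U] a1 a2 a3] .
    qed
    then show ?thesis unfolding T_simps by (auto intro!: ext)
  qed
  have E: "Cmp T (Idm T (Cod T f)) f = f \<and> Cmp T f (Idm T (Dom T f)) = f" if "f \<in> Ar T" for f
  proof -
    obtain x y p where fx: "f = (x, y, p)" by (cases f) auto
    have f: "lim_arr R Phi PhiR f" using that by (simp add: T_simps)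
    have pa: "\<And>U. U\<in>R \<Longrightarrow> arr (Phi U) (p U) (fst x U) (fst y U)"
      using la_arr[OF f] fx by auto
    have pu: "\<And>U. U \<notin> R \<Longrightarrow> p U = undefined" using la_u[OF f] fx by auto
    show ?thesis unfolding fx T_simps
      by (auto intro!: ext simp: cat_idl[OF cat pa] cat_idr[OF cat pa] pu)
  qed
  show ?thesis unfolding category_def using A B C D E by blast
qed

lemma T_arr_iff: "arr T f x y \<longleftrightarrow> lim_arr R Phi PhiR f \<and> fst f = x \<and> fst (snd f) = y"
  by (simp add: arr_def T_simps)

lemma T_groupoid: "groupoid T"
proof -
  have "iso_arr T f" if fA: "f \<in> Ar T" for f
  proof -
    obtain x y p where fx: "f = (x, y, p)" by (cases f) auto
    have f: "lim_arr R Phi PhiR f" using fA by (simp add: T_simps)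
    have x: "lim_obj R Phi PhiR x" and y: "lim_obj R Phi PhiR y"
      using la_o1[OF f] la_o2[OF f] fx by auto
    have pa: "\<And>U. U\<in>R \<Longrightarrow> arr (Phi U) (p U) (fst x U) (fst y U)"
      using la_arr[OF f] fx by auto
    have pn: "\<And>U V. U\<in>R \<Longrightarrow> V\<in>R \<Longrightarrow> U \<subseteq> V \<Longrightarrow> Cmp (Phi U) (p U) (snd x U V) = Cmp (Phi U) (snd y U V) (snd (PhiR U V) (p V))"
      using la_nat[OF f] fx by auto
    define q where "q = (\<lambda>U. if U \<in> R then ginv (Phi U) (p U) else undefined)"
    have qa: "arr (Phi U) (q U) (fst y U) (fst x U)" "Cmp (Phi U) (q U) (p U) = Idm (Phi U) (fst x U)"
      "Cmp (Phi U) (p U) (q U) = Idm (Phi U) (fst y U)" if "U \<in> R" for U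
      using ginv[OF gpd[OF that] pa[OF that]] that unfolding q_def by auto
    have nat: "Cmp (Phi U) (q U) (snd y U V) = Cmp (Phi U) (snd x U V) (snd (PhiR U V) (q V))"
      if U: "U \<in> R" "V \<in> R" "U \<subseteq> V" for U V
    proof -
      have g: "groupoid (Phi U)" using gpd U by blast
      have c: "category (Phi U)" using cat U by blast
      have fu: "is_functor (Phi V) (Phi U) (PhiR U V)" using rfun U by blast
      have axU: "arr (Phi U) (snd x U V) (fst (PhiR U V) (fst x V)) (fst x U)" using lo_arr[OF x U] .
      have ayU: "arr (Phi U) (snd y U V) (fst (PhiR U V) (fst y V)) (fst y U)" using lo_arr[OF y U] .
      have pU: "arr (Phi U) (p U) (fst x U) (fst y U)" using pa U by blast
      have pV: "arr (Phi V) (p V) (fst x V) (fst y V)" using pa U by blast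
      have Pp: "arr (Phi U) (snd (PhiR U V) (p V)) (fst (PhiR U V) (fst x V)) (fst (PhiR U V) (fst y V))"
        using fun_arr[OF fu pV] .
      have Pq: "arr (Phi U) (snd (PhiR U V) (q V)) (fst (PhiR U V) (fst y V)) (fst (PhiR U V) (fst x V))"
        using fun_arr[OF fu qa(1)[OF U(2)]] .
      have PqPp: "Cmp (Phi U) (snd (PhiR U V) (p V)) (snd (PhiR U V) (q V)) = Idm (Phi U) (fst (PhiR U V) (fst y V))"
      proof -
        have "Cmp (Phi U) (snd (PhiR U V) (p V)) (snd (PhiR U V) (q V)) = snd (PhiR U V) (Cmp (Phi V) (p V) (q V))"
          using fun_comp[OF fu qa(1)[OF U(2)] pV] by simp
        also have "\<dots> = snd (PhiR U V) (Idm (Phi V) (fst y V))" using qa(3)[OF U(2)] by simp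
        also have "\<dots> = Idm (Phi U) (fst (PhiR U V) (fst y V))" using fun_id[OF fu lo_ob[OF y U(2)]] .
        finally show ?thesis .
      qed
      have "Cmp (Phi U) (p U) (Cmp (Phi U) (q U) (snd y U V)) = snd y U V"
        using cat_assoc[OF c ayU qa(1)[OF U(1)] pU] qa(3)[OF U(1)] cat_idl[OF c ayU] by simp
      also have "\<dots> = Cmp (Phi U) (snd y U V) (Cmp (Phi U) (snd (PhiR U V) (p V)) (snd (PhiR U V) (q V)))"
        using PqPp cat_idr[OF c ayU] by simp
      also have "\<dots> = Cmp (Phi U) (Cmp (Phi U) (snd y U V) (snd (PhiR U V) (p V))) (snd (PhiR U V) (q V))"
        using cat_assoc[OF c Pq Pp ayU] by simp
      also have "\<dots> = Cmp (Phi U) (Cmp (Phi U) (p U) (snd x U V)) (snd (PhiR U V) (q V))"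
        using pn U by simp
      also have "\<dots> = Cmp (Phi U) (p U) (Cmp (Phi U) (snd x U V) (snd (PhiR U V) (q V)))"
        using cat_assoc[OF c Pq axU pU] by simp
      finally show ?thesis
        using cancel_l[OF g pU cat_comp[OF c ayU qa(1)[OF U(1)]] cat_comp[OF c Pq axU]] by blast
    qed
    have qu: "\<And>U. U \<notin> R \<Longrightarrow> q U = undefined" by (simp add: q_def)
    define f' where "f' = (y, x, q)"
    have f'a: "f' \<in> Ar T" unfolding T_simps
      apply (simp, rule laI)
      using x y qa nat qu by (auto simp: f'_def)
    have pu: "\<And>U. U \<notin> R \<Longrightarrow> p U = undefined" using la_u[OF f] fx by auto
    have E: "Cmp T f' f = Idm T (Dom T f)" "Cmp T f f' = Idm T (Cod T f)"
      unfolding f'_def fx T_simps using qa by (auto intro!: ext simp: q_def)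
    have D: "Dom T f' = Cod T f" "Cod T f' = Dom T f" by (simp_all add: fx f'_def T_simps)
    show ?thesis unfolding iso_arr_def using f'a fA D E by blast
  qed
  then show ?thesis unfolding groupoid_def using T_category by blast
qed

end


context cgf
begin

lemma sub_cgf: assumes "Q \<subseteq> R" shows "contra_gpd_functor Q Phi PhiR"
  unfolding contra_gpd_functor_def
  using assms gpd rfun fid fcomp by (meson subsetD)

lemma restr_simps: "fst (restr_obj Q x) U = (if U \<in> Q then fst x U else undefined)"
  "snd (restr_obj Q x) U V = (if U \<in> Q \<and> V \<in> Q \<and> U \<subseteq> V then snd x U V else undefined)"
  "fst (restr_ftor Q) = restr_obj Q"
  "snd (restr_ftor Q) f = (restr_obj Q (fst f), restr_obj Q (fst (snd f)), \<lambda>U. if U \<in> Q then snd (snd f) U else undefined)"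
  by (simp_all add: restr_obj_def restr_ftor_def)

lemma restr_lo: assumes Q: "Q \<subseteq> R" and x: "lim_obj R Phi PhiR x"
  shows "lim_obj Q Phi PhiR (restr_obj Q x)"
proof -
  interpret Qc: cgf Q Phi PhiR using sub_cgf[OF Q] by unfold_locales
  show ?thesis
  proof (rule Qc.loI)
    fix U assume "U \<in> Q" then show "fst (restr_obj Q x) U \<in> Ob (Phi U)"
      using lo_ob[OF x] Q by (auto simp: restr_simps)
  next
    fix U V assume "U \<in> Q" "V \<in> Q" "U \<subseteq> V"
    then show "arr (Phi U) (snd (restr_obj Q x) U V) (fst (PhiR U V) (fst (restr_obj Q x) V)) (fst (restr_obj Q x) U)"
      using lo_arr[OF x] Q by (auto simp: restr_simps)
  next
    fix U assume "U \<in> Q" then show "snd (restr_obj Q x) U U = Idm (Phi U) (fst (restr_obj Q x) U)"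
      using lo_id[OF x] Q by (auto simp: restr_simps)
  next
    fix U V W assume "U \<in> Q" "V \<in> Q" "W \<in> Q" "U \<subseteq> V" "V \<subseteq> W"
    moreover have R: "U \<in> R" "V \<in> R" "W \<in> R" using Q \<open>U \<in> Q\<close> \<open>V \<in> Q\<close> \<open>W \<in> Q\<close> by auto
    ultimately have e: "snd x U W = Cmp (Phi U) (snd x U V) (snd (PhiR U V) (snd x V W))"
      using lo_coc[OF x R] by blast
    show "snd (restr_obj Q x) U W = Cmp (Phi U) (snd (restr_obj Q x) U V) (snd (PhiR U V) (snd (restr_obj Q x) V W))"
      using \<open>U \<in> Q\<close> \<open>V \<in> Q\<close> \<open>W \<in> Q\<close> \<open>U \<subseteq> V\<close> \<open>V \<subseteq> W\<close> e order_trans[OF \<open>U \<subseteq> V\<close> \<open>V \<subseteq> W\<close>] by (simp add: restr_simps)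
  next
    fix U assume "U \<notin> Q" then show "fst (restr_obj Q x) U = undefined" by (simp add: restr_simps)
  next
    fix U V assume "\<not> (U \<in> Q \<and> V \<in> Q \<and> U \<subseteq> V)" then show "snd (restr_obj Q x) U V = undefined"
      by (simp only: restr_simps if_False)
  qed
qed

lemma restr_la: assumes Q: "Q \<subseteq> R" and f: "lim_arr R Phi PhiR f"
  shows "lim_arr Q Phi PhiR (snd (restr_ftor Q) f)"
proof -
  interpret Qc: cgf Q Phi PhiR using sub_cgf[OF Q] by unfold_locales
  show ?thesis
  proof (rule Qc.laI)
    show "lim_obj Q Phi PhiR (fst (snd (restr_ftor Q) f))"
      using restr_lo[OF Q la_o1[OF f]] by (simp add: restr_simps)
    show "lim_obj Q Phi PhiR (fst (snd (snd (restr_ftor Q) f)))"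
      using restr_lo[OF Q la_o2[OF f]] by (simp add: restr_simps)
  next
    fix U assume "U \<in> Q" then show "arr (Phi U) (snd (snd (snd (restr_ftor Q) f)) U) (fst (fst (snd (restr_ftor Q) f)) U)
          (fst (fst (snd (snd (restr_ftor Q) f))) U)"
      using la_arr[OF f] Q by (auto simp: restr_simps)
  next
    fix U V assume "U \<in> Q" "V \<in> Q" "U \<subseteq> V"
    then show "Cmp (Phi U) (snd (snd (snd (restr_ftor Q) f)) U) (snd (fst (snd (restr_ftor Q) f)) U V) =
           Cmp (Phi U) (snd (fst (snd (snd (restr_ftor Q) f))) U V) (snd (PhiR U V) (snd (snd (snd (restr_ftor Q) f)) V))"
      using la_nat[OF f] Q by (auto simp: restr_simps)
  next
    fix U assume "U \<notin> Q" then show "snd (snd (snd (restr_ftor Q) f)) U = undefined" by (simp add: restr_simps)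
  qed
qed

lemma restr_functor: assumes Q: "Q \<subseteq> R"
  shows "is_functor (twolim R Phi PhiR) (twolim Q Phi PhiR) (restr_ftor Q)"
proof -
  interpret Qc: cgf Q Phi PhiR using sub_cgf[OF Q] by unfold_locales
  have c: "category (twolim R Phi PhiR)" "category (twolim Q Phi PhiR)"
    using T_category Qc.T_category by auto
  have ob: "\<forall>x\<in>Ob (twolim R Phi PhiR). fst (restr_ftor Q) x \<in> Ob (twolim Q Phi PhiR)"
    using restr_lo[OF Q] by (simp add: T_simps Qc.T_simps restr_simps)
  have ar: "\<forall>f\<in>Ar (twolim R Phi PhiR). snd (restr_ftor Q) f \<in> Ar (twolim Q Phi PhiR) \<and>
        Dom (twolim Q Phi PhiR) (snd (restr_ftor Q) f) = fst (restr_ftor Q) (Dom (twolim R Phi PhiR) f) \<and>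
        Cod (twolim Q Phi PhiR) (snd (restr_ftor Q) f) = fst (restr_ftor Q) (Cod (twolim R Phi PhiR) f)"
    using restr_la[OF Q] by (simp add: T_simps Qc.T_simps restr_simps)
  have cm: "\<forall>f\<in>Ar (twolim R Phi PhiR). \<forall>g\<in>Ar (twolim R Phi PhiR). Cod (twolim R Phi PhiR) f = Dom (twolim R Phi PhiR) g \<longrightarrow>
        snd (restr_ftor Q) (Cmp (twolim R Phi PhiR) g f) = Cmp (twolim Q Phi PhiR) (snd (restr_ftor Q) g) (snd (restr_ftor Q) f)"
    using Q by (auto simp: T_simps Qc.T_simps restr_simps intro!: ext)
  have idm: "\<forall>x\<in>Ob (twolim R Phi PhiR). snd (restr_ftor Q) (Idm (twolim R Phi PhiR) x) = Idm (twolim Q Phi PhiR) (fst (restr_ftor Q) x)"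
    using Q by (auto simp: T_simps Qc.T_simps restr_simps intro!: ext)
  show ?thesis unfolding is_functor_def using c ob ar cm idm by blast
qed

end


lemma card3: "card {a, b, c :: nat} \<le> 3"
  by (auto simp: card_insert_if)
lemma card2: "card {a, b :: nat} \<le> 3"
  by (auto simp: card_insert_if)
lemma card1: "card {a :: nat} \<le> 3"
  by auto

locale main = cgf "Bn n" Phi PhiR for n :: nat and Phi :: "nat set \<Rightarrow> ('o,'m) cat" and PhiR +
  assumes n3: "3 \<le> n"
begin

abbreviation "N \<equiv> {1..n}"
abbreviation "P \<equiv> Bn n"
abbreviation "Q \<equiv> Bnk n (n - 3)"

lemma cardN: "card N = n" by simp

lemma P_iff: "U \<in> P \<longleftrightarrow> U \<subseteq> N \<and> U \<noteq> N"
  by (auto simp: Bn_def)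

lemma Q_iff: "V \<in> Q \<longleftrightarrow> V \<subseteq> N \<and> V \<noteq> N \<and> n - 3 \<le> card V"
proof
  assume "V \<in> Q"
  then have a: "V \<subseteq> N" "n - 3 \<le> card V" "card V \<le> n - 1" by (auto simp: Bnk_def)
  then have "V \<noteq> N" using n3 by auto
  then show "V \<subseteq> N \<and> V \<noteq> N \<and> n - 3 \<le> card V" using a by auto
next
  assume a: "V \<subseteq> N \<and> V \<noteq> N \<and> n - 3 \<le> card V"
  then have "card V < card N" by (intro psubset_card_mono) auto
  then show "V \<in> Q" using a by (auto simp: Bnk_def)
qed

lemma Q_sub: "Q \<subseteq> P" using Q_iff P_iff by auto

definition QU :: "nat set \<Rightarrow> nat set set" where "QU U = {V \<in> Q. U \<subseteq> V}"

lemma QU_iff: "V \<in> QU U \<longleftrightarrow> V \<in> Q \<and> U \<subseteq> V" by (simp add: QU_def)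

lemma QU_P: "V \<in> QU U \<Longrightarrow> V \<in> P" using Q_sub QU_iff by auto

lemma between: assumes "M \<in> QU U" "V \<in> Q" "M \<subseteq> S" "S \<subseteq> V" shows "S \<in> QU U"
proof -
  have v: "V \<subseteq> N" "V \<noteq> N" using assms(2) Q_iff by auto
  have "S \<subseteq> N" "S \<noteq> N" using v assms(4) by auto
  moreover have "card M \<le> card S" using assms(3) \<open>S \<subseteq> N\<close> by (intro card_mono) (auto intro: finite_subset)
  moreover have "n - 3 \<le> card M" "U \<subseteq> M" using assms(1) Q_iff QU_iff by auto
  ultimately show ?thesis using assms(3) by (auto simp: QU_iff Q_iff)
qed

lemma cof: assumes "S \<subseteq> N" "S \<noteq> {}" "card S \<le> 3" "U \<inter> S = {}" "U \<subseteq> N"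
  shows "N - S \<in> QU U"
proof -
  have "card (N - S) = n - card S" using assms(1) by (simp add: card_Diff_subset finite_subset)
  then have "n - 3 \<le> card (N - S)" using assms(3) by simp
  moreover have "N - S \<noteq> N" using assms(1,2) by auto
  ultimately show ?thesis using assms by (auto simp: QU_iff Q_iff)
qed

lemma QU_ne: assumes "U \<in> P" obtains c where "c \<in> N" "c \<notin> U" "N - {c} \<in> QU U"
proof -
  have "U \<subseteq> N" "U \<noteq> N" using assms P_iff by auto
  then obtain c where c: "c \<in> N" "c \<notin> U" by blast
  have "N - {c} \<in> QU U" using c assms P_iff by (intro cof) auto
  then show ?thesis using c that by blast
qed

lemma QU_out: assumes "V \<in> QU U" obtains a where "a \<in> N" "a \<notin> V" "a \<notin> U"
  using assms unfolding QU_iff Q_iff by blast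

lemma zigzag:
  assumes U: "U \<in> P"
    and inv: "\<And>V W. V \<in> QU U \<Longrightarrow> W \<in> QU U \<Longrightarrow> V \<subseteq> W \<Longrightarrow> (Rp V \<longleftrightarrow> Rp W)"
    and V0: "V0 \<in> QU U" "Rp V0" and V: "V \<in> QU U"
  shows "Rp V"
proof -
  have UN: "U \<subseteq> N" using U P_iff by auto
  have eqv: "Rp A \<longleftrightarrow> Rp B" if A: "A \<in> QU U" and B: "B \<in> QU U" for A B
  proof -
    obtain a where a: "a \<in> N" "a \<notin> A" "a \<notin> U" using QU_out[OF A] by blast
    obtain b where b: "b \<in> N" "b \<notin> B" "b \<notin> U" using QU_out[OF B] by blast
    have Va: "N - {a} \<in> QU U" using a UN card1 by (intro cof) auto
    have Vb: "N - {b} \<in> QU U" using b UN card1 by (intro cof) auto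
    have Vab: "N - {a, b} \<in> QU U" using a b UN card2 by (intro cof) auto
    have s: "A \<subseteq> N - {a}" "B \<subseteq> N - {b}" using A B a b by (auto simp: QU_iff Q_iff)
    have "Rp A \<longleftrightarrow> Rp (N - {a})" "Rp B \<longleftrightarrow> Rp (N - {b})"
      using inv[OF A Va s(1)] inv[OF B Vb s(2)] by auto
    moreover have "Rp (N - {a, b}) \<longleftrightarrow> Rp (N - {a})" "Rp (N - {a, b}) \<longleftrightarrow> Rp (N - {b})"
      using inv[OF Vab Va] inv[OF Vab Vb] by blast+
    ultimately show ?thesis by blast
  qed
  show ?thesis using eqv[OF V0(1) V] V0(2) by blast
qed

end

sublocale main \<subseteq> Qc: cgf "Bnk n (n - 3)" Phi PhiR
  unfolding cgf_def using sub_cgf[OF Q_sub] .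

context main
begin

definition sb :: "('o,'m) lobj \<Rightarrow> nat set \<Rightarrow> nat set \<Rightarrow> 'o" where
  "sb x U V = fst (PhiR U V) (fst x V)"
definition sbeta :: "('o,'m) lobj \<Rightarrow> nat set \<Rightarrow> nat set \<Rightarrow> nat set \<Rightarrow> 'm" where
  "sbeta x U V W = snd (PhiR U V) (snd x V W)"

lemma QU_sub: "U \<in> P \<Longrightarrow> V \<in> QU U \<Longrightarrow> U \<subseteq> V \<and> V \<in> P \<and> V \<in> Q"
  using QU_iff Q_sub by auto

lemma sb_ob: assumes x: "lim_obj Q Phi PhiR x" and U: "U \<in> P" and V: "V \<in> QU U"
  shows "sb x U V \<in> Ob (Phi U)"
  using fun_ob[OF rfun[OF U] Qc.lo_ob[OF x]] QU_sub[OF U V] unfolding sb_def by blast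

lemma sbeta_arr: assumes x: "lim_obj Q Phi PhiR x" and U: "U \<in> P" and V: "V \<in> QU U" and W: "W \<in> QU U"
  and VW: "V \<subseteq> W"
  shows "arr (Phi U) (sbeta x U V W) (sb x U W) (sb x U V)"
proof -
  have v: "U \<subseteq> V" "V \<in> P" "V \<in> Q" and w: "U \<subseteq> W" "W \<in> P" "W \<in> Q" using QU_sub[OF U V] QU_sub[OF U W] by auto
  have a: "arr (Phi V) (snd x V W) (fst (PhiR V W) (fst x W)) (fst x V)"
    using Qc.lo_arr[OF x v(3) w(3) VW] .
  have "fst (PhiR U W) (fst x W) = fst (PhiR U V) (fst (PhiR V W) (fst x W))"
    using compob[OF U v(2) w(2) v(1) VW Qc.lo_ob[OF x w(3)]] .
  then show ?thesis using fun_arr[OF rfun[OF U v(2) v(1)] a] unfolding sb_def sbeta_def by simp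
qed

lemma sbeta_id: assumes x: "lim_obj Q Phi PhiR x" and U: "U \<in> P" and V: "V \<in> QU U"
  shows "sbeta x U V V = Idm (Phi U) (sb x U V)"
proof -
  have v: "U \<subseteq> V" "V \<in> P" "V \<in> Q" using QU_sub[OF U V] by auto
  show ?thesis unfolding sbeta_def sb_def
    using Qc.lo_id[OF x v(3)] fun_id[OF rfun[OF U v(2) v(1)] Qc.lo_ob[OF x v(3)]] by simp
qed

lemma sbeta_coc: assumes x: "lim_obj Q Phi PhiR x" and U: "U \<in> P" and V: "V \<in> QU U" and W: "W \<in> QU U"
  and X: "X \<in> QU U" and VW: "V \<subseteq> W" and WX: "W \<subseteq> X"
  shows "sbeta x U V X = Cmp (Phi U) (sbeta x U V W) (sbeta x U W X)"
proof -
  have v: "U \<subseteq> V" "V \<in> P" "V \<in> Q" and w: "U \<subseteq> W" "W \<in> P" "W \<in> Q" and xx: "U \<subseteq> X" "X \<in> P" "X \<in> Q"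
    using QU_sub[OF U V] QU_sub[OF U W] QU_sub[OF U X] by auto
  have e: "snd x V X = Cmp (Phi V) (snd x V W) (snd (PhiR V W) (snd x W X))"
    using Qc.lo_coc[OF x v(3) w(3) xx(3) VW WX] .
  have a1: "arr (Phi V) (snd x V W) (fst (PhiR V W) (fst x W)) (fst x V)"
    using Qc.lo_arr[OF x v(3) w(3) VW] .
  have a2: "arr (Phi W) (snd x W X) (fst (PhiR W X) (fst x X)) (fst x W)"
    using Qc.lo_arr[OF x w(3) xx(3) WX] .
  have a2': "arr (Phi V) (snd (PhiR V W) (snd x W X)) (fst (PhiR V W) (fst (PhiR W X) (fst x X))) (fst (PhiR V W) (fst x W))"
    using fun_arr[OF rfun[OF v(2) w(2) VW] a2] .
  have "snd (PhiR U V) (snd x V X) = Cmp (Phi U) (snd (PhiR U V) (snd x V W)) (snd (PhiR U V) (snd (PhiR V W) (snd x W X)))"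
    using e fun_comp[OF rfun[OF U v(2) v(1)] a2' a1] by simp
  also have "snd (PhiR U V) (snd (PhiR V W) (snd x W X)) = snd (PhiR U W) (snd x W X)"
    using comparr[OF U v(2) w(2) v(1) VW a2] by simp
  finally show ?thesis unfolding sbeta_def .
qed

end


context main
begin

definition tau :: "('o,'m) lobj \<Rightarrow> nat set \<Rightarrow> nat set \<Rightarrow> nat set \<Rightarrow> 'm" where
  "tau x U V W = (THE h. arr (Phi U) h (sb x U W) (sb x U V) \<and> Cmp (Phi U) (sbeta x U (V \<inter> W) V) h = sbeta x U (V \<inter> W) W)"

definition triv :: "('o,'m) lobj \<Rightarrow> nat set \<Rightarrow> 'o \<Rightarrow> (nat set \<Rightarrow> 'm) \<Rightarrow> bool" where
  "triv x U a \<gamma> \<longleftrightarrow> a \<in> Ob (Phi U) \<and> (\<forall>V\<in>QU U. arr (Phi U) (\<gamma> V) (sb x U V) a)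
     \<and> (\<forall>V\<in>QU U. \<forall>W\<in>QU U. V \<subseteq> W \<longrightarrow> \<gamma> W = Cmp (Phi U) (\<gamma> V) (sbeta x U V W))"

lemma Q_minus1: assumes "W \<in> Q" "n - 2 \<le> card W" "c \<in> N" shows "W - {c} \<in> Q"
proof -
  have W: "W \<subseteq> N" using assms(1) Q_iff by auto
  have "finite W" using W finite_subset by blast
  then have "card W - 1 \<le> card (W - {c})" by (cases "c \<in> W") (auto simp: card_Diff_singleton)
  then show ?thesis using assms W unfolding Q_iff by auto
qed

end

locale sys = main +
  fixes x U
  assumes x: "lim_obj (Bnk n (n - 3)) Phi PhiR x" and U: "U \<in> Bn n"
begin

abbreviation "C \<equiv> Phi U"
abbreviation "s V \<equiv> sb x U V"
abbreviation "b V W \<equiv> sbeta x U V W"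
abbreviation "t V W \<equiv> tau x U V W"

lemma gC: "groupoid C" using gpd U by blast
lemma cC: "category C" using cat U by blast

lemma barr: "V \<in> QU U \<Longrightarrow> W \<in> QU U \<Longrightarrow> V \<subseteq> W \<Longrightarrow> arr C (b V W) (s W) (s V)"
  using sbeta_arr[OF x U] by blast
lemma bid: "V \<in> QU U \<Longrightarrow> b V V = Idm C (s V)"
  using sbeta_id[OF x U] by blast
lemma bcoc: "V \<in> QU U \<Longrightarrow> W \<in> QU U \<Longrightarrow> X \<in> QU U \<Longrightarrow> V \<subseteq> W \<Longrightarrow> W \<subseteq> X \<Longrightarrow>
   b V X = Cmp C (b V W) (b W X)"
  using sbeta_coc[OF x U] by blast

lemma tau_char: assumes V: "V \<in> QU U" and W: "W \<in> QU U" and M: "M \<in> QU U" "M \<subseteq> V" "M \<subseteq> W"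
  shows "arr C (t V W) (s W) (s V) \<and> Cmp C (b M V) (t V W) = b M W"
proof -
  define I where "I = V \<inter> W"
  have I: "I \<in> QU U" using between[OF M(1), of V I] V M unfolding I_def QU_iff by auto
  have IV: "I \<subseteq> V" "I \<subseteq> W" unfolding I_def by auto
  have bIV: "arr C (b I V) (s V) (s I)" and bIW: "arr C (b I W) (s W) (s I)" using barr I V W IV by auto
  note gi = ginv[OF gC bIV]
  define h0 where "h0 = Cmp C (ginv C (b I V)) (b I W)"
  have h0: "arr C h0 (s W) (s V)" unfolding h0_def using cat_comp[OF cC bIW] gi by blast
  have h0e: "Cmp C (b I V) h0 = b I W"
    unfolding h0_def using cat_assoc[OF cC bIW _ bIV, of "ginv C (b I V)"] gi cat_idl[OF cC bIW] by metis
  have ex: "arr C (t V W) (s W) (s V) \<and> Cmp C (b I V) (t V W) = b I W"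
    unfolding tau_def I_def[symmetric]
  proof (rule theI[of _ h0])
    show "arr C h0 (s W) (s V) \<and> Cmp C (b I V) h0 = b I W" using h0 h0e by blast
    fix h assume "arr C h (s W) (s V) \<and> Cmp C (b I V) h = b I W"
    then show "h = h0" using cancel_l[OF gC bIV _ h0] h0e by metis
  qed
  have MI: "M \<subseteq> I" using M unfolding I_def by auto
  have bMI: "arr C (b M I) (s I) (s M)" using barr M I MI by auto
  have "Cmp C (b M V) (t V W) = Cmp C (Cmp C (b M I) (b I V)) (t V W)"
    using bcoc[OF M(1) I V MI IV(1)] by simp
  also have "\<dots> = Cmp C (b M I) (Cmp C (b I V) (t V W))"
    using cat_assoc[OF cC _ bIV bMI] ex by metis
  also have "\<dots> = b M W" using ex bcoc[OF M(1) I W MI IV(2)] by simp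
  finally show ?thesis using ex by blast
qed

lemma tau_uniq: assumes V: "V \<in> QU U" and W: "W \<in> QU U" and M: "M \<in> QU U" "M \<subseteq> V" "M \<subseteq> W"
  and h: "arr C h (s W) (s V)" "Cmp C (b M V) h = b M W"
  shows "h = t V W"
proof -
  have bMV: "arr C (b M V) (s V) (s M)" using barr M V by auto
  show ?thesis using cancel_l[OF gC bMV h(1)] tau_char[OF V W M] h(2) by metis
qed

lemma tau_sub: assumes V: "V \<in> QU U" and W: "W \<in> QU U" and VW: "V \<subseteq> W"
  shows "t V W = b V W"
proof -
  have "b V W = t V W"
  proof (rule tau_uniq[OF V W V order_refl VW])
    show "arr C (b V W) (s W) (s V)" using barr V W VW by auto
    show "Cmp C (b V V) (b V W) = b V W" using bid[OF V] cat_idl[OF cC barr[OF V W VW]] by simp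
  qed
  then show ?thesis by simp
qed

lemma tau_arr: assumes V: "V \<in> QU U" and W: "W \<in> QU U" and M: "M \<in> QU U" "M \<subseteq> V" "M \<subseteq> W"
  shows "arr C (t V W) (s W) (s V)"
  using tau_char[OF assms] by blast

lemma tau_coc: assumes V: "V \<in> QU U" and W: "W \<in> QU U" and X: "X \<in> QU U"
  and M: "M \<in> QU U" "M \<subseteq> V" "M \<subseteq> W" "M \<subseteq> X"
  shows "Cmp C (t V W) (t W X) = t V X"
proof (rule tau_uniq[OF V X M(1,2,4)])
  have a1: "arr C (t V W) (s W) (s V)" and a2: "arr C (t W X) (s X) (s W)"
    using tau_arr[OF V W M(1,2,3)] tau_arr[OF W X M(1,3,4)] .
  show "arr C (Cmp C (t V W) (t W X)) (s X) (s V)" using cat_comp[OF cC a2 a1] .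
  have bMV: "arr C (b M V) (s V) (s M)" using barr M V by auto
  have "Cmp C (b M V) (Cmp C (t V W) (t W X)) = Cmp C (Cmp C (b M V) (t V W)) (t W X)"
    using cat_assoc[OF cC a2 a1 bMV] .
  also have "\<dots> = Cmp C (b M W) (t W X)" using tau_char[OF V W M(1,2,3)] by simp
  also have "\<dots> = b M X" using tau_char[OF W X M(1,3,4)] by simp
  finally show "Cmp C (b M V) (Cmp C (t V W) (t W X)) = b M X" .
qed

lemma UN: "U \<subseteq> N" using U P_iff by auto

lemma triv_ex: "\<exists>a \<gamma>. triv x U a \<gamma>"
proof -
  obtain c where c: "c \<in> N" "c \<notin> U" "N - {c} \<in> QU U" using QU_ne[OF U] by blast
  define V0 where "V0 = N - {c}"
  have V0: "V0 \<in> QU U" using c V0_def by simp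
  define av where "av V = (SOME a. a \<in> N \<and> a \<notin> V \<and> a \<notin> U)" for V
  have av: "av V \<in> N" "av V \<notin> V" "av V \<notin> U" if VV: "V \<in> QU U" for V
  proof -
    obtain a where "a \<in> N" "a \<notin> V" "a \<notin> U" using QU_out[OF VV] by blast
    then have "\<exists>a. a \<in> N \<and> a \<notin> V \<and> a \<notin> U" by blast
    from someI_ex[OF this] show "av V \<in> N" "av V \<notin> V" "av V \<notin> U" unfolding av_def by auto
  qed
  define \<gamma> where "\<gamma> V = (if V - {c} \<in> Q then t V0 V else Cmp C (t V0 (N - {av V})) (t (N - {av V}) V))" for V
  have Na: "N - {a} \<in> QU U" if "a \<in> N" "a \<notin> U" for a
    using that UN card1 by (intro cof) auto
  have Nca: "N - {c, a} \<in> QU U" if "a \<in> N" "a \<notin> U" for a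
    using that c UN card2 by (intro cof) auto
  have Ncab: "N - {c, a, b} \<in> QU U" if "a \<in> N" "a \<notin> U" "b \<in> N" "b \<notin> U" for a b
    using that c UN card3 by (intro cof) auto
  have Wm: "W - {d} \<in> QU U" if "W \<in> QU U" "W - {d} \<in> Q" "d \<notin> U" for W d
    using that QU_iff by auto
  have WN: "W \<subseteq> N" if "W \<in> QU U" for W using that QU_iff Q_iff by auto
  have L: "t V0 W = Cmp C (t V0 (N - {a})) (t (N - {a}) W)"
    if W: "W \<in> QU U" "W - {c} \<in> Q" "W - {a} \<in> Q" and a: "a \<in> N" "a \<notin> U" for W a
  proof -
    obtain bb where bb: "bb \<in> N" "bb \<notin> W" "bb \<notin> U" using QU_out[OF W(1)] by blast
    define Wb where "Wb = N - {bb}"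
    define Va where "Va = N - {a}"
    have Wb: "Wb \<in> QU U" using Na[OF bb(1,3)] Wb_def by simp
    have Va: "Va \<in> QU U" using Na[OF a] Va_def by simp
    have Mc: "W - {c} \<in> QU U" using Wm[OF W(1,2) c(2)] .
    have Ma: "W - {a} \<in> QU U" using Wm[OF W(1,3) a(2)] .
    have M3: "N - {c, a, bb} \<in> QU U" using Ncab[OF a bb(1,3)] .
    have e1: "Cmp C (t V0 Wb) (t Wb W) = t V0 W"
      by (rule tau_coc[OF V0 Wb W(1) Mc]) (use bb WN[OF W(1)] in \<open>auto simp: V0_def Wb_def\<close>)
    have e2: "Cmp C (t Va Wb) (t Wb W) = t Va W"
      by (rule tau_coc[OF Va Wb W(1) Ma]) (use bb WN[OF W(1)] in \<open>auto simp: Va_def Wb_def\<close>)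
    have e3: "Cmp C (t V0 Va) (t Va Wb) = t V0 Wb"
      by (rule tau_coc[OF V0 Va Wb M3]) (auto simp: V0_def Wb_def Va_def)
    have a1: "arr C (t Wb W) (s W) (s Wb)"
      by (rule tau_arr[OF Wb W(1) Mc]) (use bb WN[OF W(1)] in \<open>auto simp: Wb_def\<close>)
    have a2: "arr C (t Va Wb) (s Wb) (s Va)"
      by (rule tau_arr[OF Va Wb M3]) (auto simp: Wb_def Va_def)
    have a3: "arr C (t V0 Va) (s Va) (s V0)"
      by (rule tau_arr[OF V0 Va M3]) (auto simp: V0_def Va_def)
    have "Cmp C (t V0 Va) (t Va W) = Cmp C (t V0 Va) (Cmp C (t Va Wb) (t Wb W))" using e2 by simp
    also have "\<dots> = Cmp C (Cmp C (t V0 Va) (t Va Wb)) (t Wb W)" using cat_assoc[OF cC a1 a2 a3] .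
    also have "\<dots> = t V0 W" using e3 e1 by simp
    finally show ?thesis unfolding Va_def by simp
  qed
  have garr: "arr C (\<gamma> V) (s V) (s V0)" if V: "V \<in> QU U" for V
  proof (cases "V - {c} \<in> Q")
    case True
    then show ?thesis unfolding \<gamma>_def using tau_arr[OF V0 V Wm[OF V True c(2)]] WN[OF V]
      by (auto simp: V0_def)
  next
    case False
    define a where "a = av V"
    have a: "a \<in> N" "a \<notin> V" "a \<notin> U" using av[OF V] a_def by auto
    have Va: "N - {a} \<in> QU U" using Na[OF a(1,3)] .
    have a1: "arr C (t (N - {a}) V) (s V) (s (N - {a}))"
      by (rule tau_arr[OF Va V V]) (use a WN[OF V] in auto)
    have a2: "arr C (t V0 (N - {a})) (s (N - {a})) (s V0)"
      by (rule tau_arr[OF V0 Va Nca[OF a(1,3)]]) (auto simp: V0_def)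
    show ?thesis using False cat_comp[OF cC a1 a2] unfolding \<gamma>_def a_def by simp
  qed
  have gcoc: "\<gamma> W = Cmp C (\<gamma> V) (b V W)" if V: "V \<in> QU U" and W: "W \<in> QU U" and VW: "V \<subseteq> W" for V W
  proof -
    have bt: "b V W = t V W" using tau_sub[OF V W VW] by simp
    show ?thesis
    proof (cases "V - {c} \<in> Q")
      case True
      have Mc: "V - {c} \<in> QU U" using Wm[OF V True c(2)] .
      have "W - {c} \<in> QU U" using between[OF Mc, of W "W - {c}"] W VW QU_iff by auto
      then have "W - {c} \<in> Q" using QU_iff by auto
      then have gW: "\<gamma> W = t V0 W" unfolding \<gamma>_def by simp
      have "Cmp C (t V0 V) (t V W) = t V0 W"
        by (rule tau_coc[OF V0 V W Mc]) (use VW WN[OF V] in \<open>auto simp: V0_def\<close>)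
      then show ?thesis using gW True bt unfolding \<gamma>_def by simp
    next
      case False
      show ?thesis
      proof (cases "W = V")
        case True
        then show ?thesis using bid[OF V] cat_idr[OF cC garr[OF V]] by simp
      next
        case WV: False
        have fW: "finite W" using WN[OF W] finite_subset by blast
        have "card V < card W" using psubset_card_mono[OF fW] VW WV by blast
        moreover have "n - 3 \<le> card V" using V QU_iff Q_iff by auto
        ultimately have cW: "n - 2 \<le> card W" by linarith
        define a where "a = av V"
        have a: "a \<in> N" "a \<notin> V" "a \<notin> U" using av[OF V] a_def by auto
        have WQ: "W \<in> Q" using W QU_iff by auto
        have Wc: "W - {c} \<in> Q" using Q_minus1[OF WQ cW c(1)] .
        have Wa: "W - {a} \<in> Q" using Q_minus1[OF WQ cW a(1)] .
        have gW: "\<gamma> W = t V0 W" unfolding \<gamma>_def using Wc by simp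
        have gV: "\<gamma> V = Cmp C (t V0 (N - {a})) (t (N - {a}) V)" unfolding \<gamma>_def a_def using False by simp
        have Va: "N - {a} \<in> QU U" using Na[OF a(1,3)] .
        have VVa: "V \<subseteq> N - {a}" using a WN[OF V] by auto
        have a1: "arr C (t (N - {a}) V) (s V) (s (N - {a}))"
          by (rule tau_arr[OF Va V V VVa]) auto
        have a2: "arr C (t V0 (N - {a})) (s (N - {a})) (s V0)"
          by (rule tau_arr[OF V0 Va Nca[OF a(1,3)]]) (auto simp: V0_def)
        have a3: "arr C (t V W) (s W) (s V)" using tau_arr[OF V W V order_refl VW] .
        have "Cmp C (\<gamma> V) (b V W) = Cmp C (t V0 (N - {a})) (Cmp C (t (N - {a}) V) (t V W))"
          using gV bt cat_assoc[OF cC a3 a1 a2] by simp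
        also have "Cmp C (t (N - {a}) V) (t V W) = t (N - {a}) W"
          using tau_coc[OF Va V W V VVa order_refl VW] .
        also have "Cmp C (t V0 (N - {a})) (t (N - {a}) W) = t V0 W"
          using L[OF W Wc Wa a(1,3)] by simp
        finally show ?thesis using gW by simp
      qed
    qed
  qed
  have "triv x U (s V0) \<gamma>"
    unfolding triv_def using sb_ob[OF x U V0] garr gcoc by blast
  then show ?thesis by blast
qed

end


context main
begin

definition trivS :: "('o,'m) lobj \<Rightarrow> nat set \<Rightarrow> nat set \<Rightarrow> 'o \<Rightarrow> (nat set \<Rightarrow> 'm) \<Rightarrow> bool" where
  "trivS x U U' a \<gamma> \<longleftrightarrow> a \<in> Ob (Phi U) \<and> (\<forall>V\<in>QU U'. arr (Phi U) (\<gamma> V) (sb x U V) a)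
     \<and> (\<forall>V\<in>QU U'. \<forall>W\<in>QU U'. V \<subseteq> W \<longrightarrow> \<gamma> W = Cmp (Phi U) (\<gamma> V) (sbeta x U V W))"

lemma QU_mono: "U \<subseteq> U' \<Longrightarrow> V \<in> QU U' \<Longrightarrow> V \<in> QU U"
  by (auto simp: QU_iff)

lemma triv_ob: "triv x U a \<gamma> \<Longrightarrow> a \<in> Ob (Phi U)" unfolding triv_def by blast
lemma triv_arr: "triv x U a \<gamma> \<Longrightarrow> V \<in> QU U \<Longrightarrow> arr (Phi U) (\<gamma> V) (sb x U V) a"
  unfolding triv_def by blast
lemma triv_coc: "triv x U a \<gamma> \<Longrightarrow> V \<in> QU U \<Longrightarrow> W \<in> QU U \<Longrightarrow> V \<subseteq> W \<Longrightarrow> \<gamma> W = Cmp (Phi U) (\<gamma> V) (sbeta x U V W)"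
  unfolding triv_def by blast

lemma triv_S: assumes "triv x U a \<gamma>" "U \<subseteq> U'" shows "trivS x U U' a \<gamma>"
proof -
  have m: "\<And>V. V \<in> QU U' \<Longrightarrow> V \<in> QU U" using QU_mono[OF assms(2)] by blast
  show ?thesis unfolding trivS_def
  proof (intro conjI ballI impI)
    show "a \<in> Ob (Phi U)" using triv_ob[OF assms(1)] .
  next
    fix V assume "V \<in> QU U'" then show "arr (Phi U) (\<gamma> V) (sb x U V) a" using triv_arr[OF assms(1) m] by blast
  next
    fix V W assume "V \<in> QU U'" "W \<in> QU U'" "V \<subseteq> W"
    then show "\<gamma> W = Cmp (Phi U) (\<gamma> V) (sbeta x U V W)" using triv_coc[OF assms(1) m m] by blast
  qed
qed

lemma trivS_ob: "trivS x U U' a \<gamma> \<Longrightarrow> a \<in> Ob (Phi U)" unfolding trivS_def by blast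
lemma trivS_arr: "trivS x U U' a \<gamma> \<Longrightarrow> V \<in> QU U' \<Longrightarrow> arr (Phi U) (\<gamma> V) (sb x U V) a"
  unfolding trivS_def by blast
lemma trivS_coc: "trivS x U U' a \<gamma> \<Longrightarrow> V \<in> QU U' \<Longrightarrow> W \<in> QU U' \<Longrightarrow> V \<subseteq> W \<Longrightarrow> \<gamma> W = Cmp (Phi U) (\<gamma> V) (sbeta x U V W)"
  unfolding trivS_def by blast

definition cmpr :: "('o,'m) cat \<Rightarrow> nat set set \<Rightarrow> 'o \<Rightarrow> (nat set \<Rightarrow> 'm) \<Rightarrow> 'o \<Rightarrow> (nat set \<Rightarrow> 'm) \<Rightarrow> (nat set \<Rightarrow> 'm) \<Rightarrow> 'm" where
  "cmpr C S a \<gamma> d \<delta> \<phi> = (THE h. arr C h a d \<and> (\<forall>V\<in>S. Cmp C h (\<gamma> V) = Cmp C (\<delta> V) (\<phi> V)))"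

lemma cmpr_eq: assumes g: "groupoid C" and V0: "V0 \<in> S" "arr C (\<gamma> V0) s0 a"
  and h: "arr C h a d" "\<forall>V\<in>S. Cmp C h (\<gamma> V) = Cmp C (\<delta> V) (\<phi> V)"
  shows "cmpr C S a \<gamma> d \<delta> \<phi> = h"
  unfolding cmpr_def
proof (rule the_equality)
  show "arr C h a d \<and> (\<forall>V\<in>S. Cmp C h (\<gamma> V) = Cmp C (\<delta> V) (\<phi> V))" using h by blast
  fix h' assume h': "arr C h' a d \<and> (\<forall>V\<in>S. Cmp C h' (\<gamma> V) = Cmp C (\<delta> V) (\<phi> V))"
  then have "Cmp C h' (\<gamma> V0) = Cmp C h (\<gamma> V0)" using h V0 by metis
  then show "h' = h" using cancel_r[OF g V0(2)] h' h by blast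
qed

lemma cmpr_prop: assumes g: "groupoid C" and V0: "V0 \<in> S" "arr C (\<gamma> V0) s0 a"
  and ex: "\<exists>h. arr C h a d \<and> (\<forall>V\<in>S. Cmp C h (\<gamma> V) = Cmp C (\<delta> V) (\<phi> V))"
  shows "arr C (cmpr C S a \<gamma> d \<delta> \<phi>) a d \<and> (\<forall>V\<in>S. Cmp C (cmpr C S a \<gamma> d \<delta> \<phi>) (\<gamma> V) = Cmp C (\<delta> V) (\<phi> V))"
proof -
  obtain h where h: "arr C h a d" "\<forall>V\<in>S. Cmp C h (\<gamma> V) = Cmp C (\<delta> V) (\<phi> V)" using ex by blast
  show ?thesis using cmpr_eq[OF g V0 h] h by simp
qed

lemma cmp_ex:
  assumes x: "lim_obj Q Phi PhiR x" and y: "lim_obj Q Phi PhiR y" and U: "U \<in> P" and U': "U' \<in> P"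
    and UU: "U \<subseteq> U'"
    and tx: "trivS x U U' a \<gamma>" and ty: "trivS y U U' d \<delta>"
    and pa: "\<And>V. V \<in> QU U' \<Longrightarrow> arr (Phi U) (\<phi> V) (sb x U V) (sb y U V)"
    and pn: "\<And>V W. V \<in> QU U' \<Longrightarrow> W \<in> QU U' \<Longrightarrow> V \<subseteq> W \<Longrightarrow>
              Cmp (Phi U) (sbeta y U V W) (\<phi> W) = Cmp (Phi U) (\<phi> V) (sbeta x U V W)"
  shows "\<exists>h. arr (Phi U) h a d \<and> (\<forall>V\<in>QU U'. Cmp (Phi U) h (\<gamma> V) = Cmp (Phi U) (\<delta> V) (\<phi> V))"
proof -
  have g: "groupoid (Phi U)" using gpd U by blast
  have c: "category (Phi U)" using cat U by blast
  obtain cc where "cc \<in> N" "cc \<notin> U'" "N - {cc} \<in> QU U'" using QU_ne[OF U'] by blast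
  then have V0: "N - {cc} \<in> QU U'" by blast
  define V0 where "V0 = N - {cc}"
  have V0': "V0 \<in> QU U'" using V0 V0_def by simp
  have ga: "\<And>V. V \<in> QU U' \<Longrightarrow> arr (Phi U) (\<gamma> V) (sb x U V) a" using trivS_arr[OF tx] by blast
  have da: "\<And>V. V \<in> QU U' \<Longrightarrow> arr (Phi U) (\<delta> V) (sb y U V) d" using trivS_arr[OF ty] by blast
  note gi = ginv[OF g ga[OF V0']]
  define h0 where "h0 = Cmp (Phi U) (Cmp (Phi U) (\<delta> V0) (\<phi> V0)) (ginv (Phi U) (\<gamma> V0))"
  have dp: "arr (Phi U) (Cmp (Phi U) (\<delta> V0) (\<phi> V0)) (sb x U V0) d"
    using cat_comp[OF c pa[OF V0'] da[OF V0']] .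
  have h0a: "arr (Phi U) h0 a d" unfolding h0_def using cat_comp[OF c _ dp] gi by blast
  have R0: "Cmp (Phi U) h0 (\<gamma> V0) = Cmp (Phi U) (\<delta> V0) (\<phi> V0)"
  proof -
    have "Cmp (Phi U) h0 (\<gamma> V0) = Cmp (Phi U) (Cmp (Phi U) (\<delta> V0) (\<phi> V0)) (Cmp (Phi U) (ginv (Phi U) (\<gamma> V0)) (\<gamma> V0))"
      unfolding h0_def using cat_assoc[OF c ga[OF V0'] _ dp, of "ginv (Phi U) (\<gamma> V0)"] gi by metis
    also have "\<dots> = Cmp (Phi U) (\<delta> V0) (\<phi> V0)" using gi cat_idr[OF c dp] by simp
    finally show ?thesis .
  qed
  have inv: "Cmp (Phi U) h0 (\<gamma> V) = Cmp (Phi U) (\<delta> V) (\<phi> V) \<longleftrightarrow> Cmp (Phi U) h0 (\<gamma> W) = Cmp (Phi U) (\<delta> W) (\<phi> W)"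
    if V: "V \<in> QU U'" and W: "W \<in> QU U'" and VW: "V \<subseteq> W" for V W
  proof -
    have V1: "V \<in> QU U" and W1: "W \<in> QU U" using QU_mono[OF UU] V W by auto
    have bx: "arr (Phi U) (sbeta x U V W) (sb x U W) (sb x U V)" using sbeta_arr[OF x U V1 W1 VW] .
    have by': "arr (Phi U) (sbeta y U V W) (sb y U W) (sb y U V)" using sbeta_arr[OF y U V1 W1 VW] .
    have e1: "Cmp (Phi U) h0 (\<gamma> W) = Cmp (Phi U) (Cmp (Phi U) h0 (\<gamma> V)) (sbeta x U V W)"
      using trivS_coc[OF tx V W VW] cat_assoc[OF c bx ga[OF V] h0a] by simp
    have dpV: "arr (Phi U) (Cmp (Phi U) (\<delta> V) (\<phi> V)) (sb x U V) d" using cat_comp[OF c pa[OF V] da[OF V]] .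
    have "Cmp (Phi U) (\<delta> W) (\<phi> W) = Cmp (Phi U) (Cmp (Phi U) (\<delta> V) (sbeta y U V W)) (\<phi> W)"
      using trivS_coc[OF ty V W VW] by simp
    also have "\<dots> = Cmp (Phi U) (\<delta> V) (Cmp (Phi U) (sbeta y U V W) (\<phi> W))"
      using cat_assoc[OF c pa[OF W] by' da[OF V]] by simp
    also have "\<dots> = Cmp (Phi U) (\<delta> V) (Cmp (Phi U) (\<phi> V) (sbeta x U V W))" using pn[OF V W VW] by simp
    also have "\<dots> = Cmp (Phi U) (Cmp (Phi U) (\<delta> V) (\<phi> V)) (sbeta x U V W)"
      using cat_assoc[OF c bx pa[OF V] da[OF V]] by simp
    finally have e2: "Cmp (Phi U) (\<delta> W) (\<phi> W) = Cmp (Phi U) (Cmp (Phi U) (\<delta> V) (\<phi> V)) (sbeta x U V W)" .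
    have hV: "arr (Phi U) (Cmp (Phi U) h0 (\<gamma> V)) (sb x U V) d" using cat_comp[OF c ga[OF V] h0a] .
    show ?thesis
    proof
      assume "Cmp (Phi U) h0 (\<gamma> V) = Cmp (Phi U) (\<delta> V) (\<phi> V)"
      then show "Cmp (Phi U) h0 (\<gamma> W) = Cmp (Phi U) (\<delta> W) (\<phi> W)" using e1 e2 by simp
    next
      assume "Cmp (Phi U) h0 (\<gamma> W) = Cmp (Phi U) (\<delta> W) (\<phi> W)"
      then have "Cmp (Phi U) (Cmp (Phi U) h0 (\<gamma> V)) (sbeta x U V W) = Cmp (Phi U) (Cmp (Phi U) (\<delta> V) (\<phi> V)) (sbeta x U V W)"
        using e1 e2 by simp
      then show "Cmp (Phi U) h0 (\<gamma> V) = Cmp (Phi U) (\<delta> V) (\<phi> V)"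
        using cancel_r[OF g bx hV dpV] by blast
    qed
  qed
  have "\<forall>V\<in>QU U'. Cmp (Phi U) h0 (\<gamma> V) = Cmp (Phi U) (\<delta> V) (\<phi> V)"
  proof
    fix V assume V: "V \<in> QU U'"
    show "Cmp (Phi U) h0 (\<gamma> V) = Cmp (Phi U) (\<delta> V) (\<phi> V)"
      by (rule zigzag[OF U', where Rp = "\<lambda>V. Cmp (Phi U) h0 (\<gamma> V) = Cmp (Phi U) (\<delta> V) (\<phi> V)", OF inv V0' R0 V])
  qed
  then show ?thesis using h0a by blast
qed

end


context main
begin

lemma sys_inst: assumes "lim_obj Q Phi PhiR x" "U \<in> P" shows "sys n Phi PhiR x U"
  unfolding sys_def sys_axioms_def main_def main_axioms_def cgf_def using cgf n3 assms by blast

definition gpair :: "('o,'m) lobj \<Rightarrow> nat set \<Rightarrow> 'o \<times> (nat set \<Rightarrow> 'm)" where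
  "gpair x U = (SOME p. triv x U (fst p) (snd p))"
definition ga :: "('o,'m) lobj \<Rightarrow> nat set \<Rightarrow> 'o" where "ga x U = fst (gpair x U)"
definition gg :: "('o,'m) lobj \<Rightarrow> nat set \<Rightarrow> nat set \<Rightarrow> 'm" where "gg x U = snd (gpair x U)"

lemma gtriv: assumes "lim_obj Q Phi PhiR x" "U \<in> P" shows "triv x U (ga x U) (gg x U)"
proof -
  obtain a \<gamma> where "triv x U a \<gamma>" using sys.triv_ex[OF sys_inst[OF assms]] by blast
  then have "\<exists>p. triv x U (fst p) (snd p)" by (intro exI[of _ "(a, \<gamma>)"]) simp
  from someI_ex[OF this] show ?thesis unfolding ga_def gg_def gpair_def .
qed

lemma sb_push: assumes x: "lim_obj Q Phi PhiR x" and U: "U \<in> P" "U' \<in> P" "U \<subseteq> U'" and V: "V \<in> QU U'"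
  shows "fst (PhiR U U') (sb x U' V) = sb x U V"
proof -
  have v: "U' \<subseteq> V" "V \<in> P" "V \<in> Q" using QU_sub[OF U(2) V] by auto
  show ?thesis unfolding sb_def using compob[OF U(1,2) v(2) U(3) v(1) Qc.lo_ob[OF x v(3)]] by simp
qed

lemma sbeta_push: assumes x: "lim_obj Q Phi PhiR x" and U: "U \<in> P" "U' \<in> P" "U \<subseteq> U'"
  and V: "V \<in> QU U'" and W: "W \<in> QU U'" and VW: "V \<subseteq> W"
  shows "snd (PhiR U U') (sbeta x U' V W) = sbeta x U V W"
proof -
  have v: "U' \<subseteq> V" "V \<in> P" "V \<in> Q" using QU_sub[OF U(2) V] by auto
  have w: "W \<in> Q" using QU_sub[OF U(2) W] by auto
  show ?thesis unfolding sbeta_def using comparr[OF U(1,2) v(2) U(3) v(1) Qc.lo_arr[OF x v(3) w VW]] by simp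
qed

lemma triv_push: assumes x: "lim_obj Q Phi PhiR x" and U: "U \<in> P" "U' \<in> P" "U \<subseteq> U'"
  and t: "triv x U' a \<gamma>"
  shows "trivS x U U' (fst (PhiR U U') a) (\<lambda>V. snd (PhiR U U') (\<gamma> V))"
proof -
  have F: "is_functor (Phi U') (Phi U) (PhiR U U')" using rfun[OF U] .
  show ?thesis unfolding trivS_def
  proof (intro conjI ballI impI)
    show "fst (PhiR U U') a \<in> Ob (Phi U)" using fun_ob[OF F triv_ob[OF t]] .
  next
    fix V assume V: "V \<in> QU U'"
    show "arr (Phi U) (snd (PhiR U U') (\<gamma> V)) (sb x U V) (fst (PhiR U U') a)"
      using fun_arr[OF F triv_arr[OF t V]] sb_push[OF x U V] by simp
  next
    fix V W assume V: "V \<in> QU U'" and W: "W \<in> QU U'" and VW: "V \<subseteq> W"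
    have "snd (PhiR U U') (\<gamma> W) = snd (PhiR U U') (Cmp (Phi U') (\<gamma> V) (sbeta x U' V W))"
      using triv_coc[OF t V W VW] by simp
    also have "\<dots> = Cmp (Phi U) (snd (PhiR U U') (\<gamma> V)) (snd (PhiR U U') (sbeta x U' V W))"
      using fun_comp[OF F sbeta_arr[OF x U(2) V W VW] triv_arr[OF t V]] .
    also have "\<dots> = Cmp (Phi U) (snd (PhiR U U') (\<gamma> V)) (sbeta x U V W)"
      using sbeta_push[OF x U V W VW] by simp
    finally show "snd (PhiR U U') (\<gamma> W) = Cmp (Phi U) (snd (PhiR U U') (\<gamma> V)) (sbeta x U V W)" .
  qed
qed

lemma idmor: assumes x: "lim_obj Q Phi PhiR x" and U: "U \<in> P" "U' \<in> P" "U \<subseteq> U'"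
  shows "\<And>V. V \<in> QU U' \<Longrightarrow> arr (Phi U) (Idm (Phi U) (sb x U V)) (sb x U V) (sb x U V)"
    and "\<And>V W. V \<in> QU U' \<Longrightarrow> W \<in> QU U' \<Longrightarrow> V \<subseteq> W \<Longrightarrow>
        Cmp (Phi U) (sbeta x U V W) (Idm (Phi U) (sb x U W)) = Cmp (Phi U) (Idm (Phi U) (sb x U V)) (sbeta x U V W)"
proof -
  fix V assume V: "V \<in> QU U'"
  show "arr (Phi U) (Idm (Phi U) (sb x U V)) (sb x U V) (sb x U V)"
    using cat_id[OF cat[OF U(1)] sb_ob[OF x U(1) QU_mono[OF U(3) V]]] .
next
  fix V W assume V: "V \<in> QU U'" and W: "W \<in> QU U'" and VW: "V \<subseteq> W"
  have b: "arr (Phi U) (sbeta x U V W) (sb x U W) (sb x U V)"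
    using sbeta_arr[OF x U(1) QU_mono[OF U(3) V] QU_mono[OF U(3) W] VW] .
  show "Cmp (Phi U) (sbeta x U V W) (Idm (Phi U) (sb x U W)) = Cmp (Phi U) (Idm (Phi U) (sb x U V)) (sbeta x U V W)"
    using cat_idl[OF cat[OF U(1)] b] cat_idr[OF cat[OF U(1)] b] by simp
qed

definition aG :: "('o,'m) lobj \<Rightarrow> nat set \<Rightarrow> nat set \<Rightarrow> 'm" where
  "aG x U U' = cmpr (Phi U) (QU U') (fst (PhiR U U') (ga x U')) (\<lambda>V. snd (PhiR U U') (gg x U' V))
       (ga x U) (gg x U) (\<lambda>V. Idm (Phi U) (sb x U V))"

lemma aG_prop: assumes x: "lim_obj Q Phi PhiR x" and U: "U \<in> P" "U' \<in> P" "U \<subseteq> U'"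
  shows "arr (Phi U) (aG x U U') (fst (PhiR U U') (ga x U')) (ga x U)"
    and "\<And>V. V \<in> QU U' \<Longrightarrow> Cmp (Phi U) (aG x U U') (snd (PhiR U U') (gg x U' V)) = gg x U V"
proof -
  obtain cc where V0: "N - {cc} \<in> QU U'" using QU_ne[OF U(2)] by blast
  have tx: "trivS x U U' (fst (PhiR U U') (ga x U')) (\<lambda>V. snd (PhiR U U') (gg x U' V))"
    using triv_push[OF x U gtriv[OF x U(2)]] .
  have ty: "trivS x U U' (ga x U) (gg x U)" using triv_S[OF gtriv[OF x U(1)] U(3)] .
  have P: "arr (Phi U) (aG x U U') (fst (PhiR U U') (ga x U')) (ga x U) \<and>
    (\<forall>V\<in>QU U'. Cmp (Phi U) (aG x U U') (snd (PhiR U U') (gg x U' V)) = Cmp (Phi U) (gg x U V) (Idm (Phi U) (sb x U V)))"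
    unfolding aG_def
    by (rule cmpr_prop[OF gpd[OF U(1)] V0 trivS_arr[OF tx V0] cmp_ex[OF x x U(1,2,3) tx ty idmor[OF x U]]])
  show "arr (Phi U) (aG x U U') (fst (PhiR U U') (ga x U')) (ga x U)" using P by blast
  fix V assume V: "V \<in> QU U'"
  show "Cmp (Phi U) (aG x U U') (snd (PhiR U U') (gg x U' V)) = gg x U V"
    using P V cat_idr[OF cat[OF U(1)] trivS_arr[OF ty V]] by simp
qed

lemma aG_eq: assumes x: "lim_obj Q Phi PhiR x" and U: "U \<in> P" "U' \<in> P" "U \<subseteq> U'"
  and h: "arr (Phi U) h (fst (PhiR U U') (ga x U')) (ga x U)"
    "\<And>V. V \<in> QU U' \<Longrightarrow> Cmp (Phi U) h (snd (PhiR U U') (gg x U' V)) = gg x U V"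
  shows "aG x U U' = h"
proof -
  obtain cc where V0: "N - {cc} \<in> QU U'" using QU_ne[OF U(2)] by blast
  have tx: "trivS x U U' (fst (PhiR U U') (ga x U')) (\<lambda>V. snd (PhiR U U') (gg x U' V))"
    using triv_push[OF x U gtriv[OF x U(2)]] .
  have ty: "trivS x U U' (ga x U) (gg x U)" using triv_S[OF gtriv[OF x U(1)] U(3)] .
  have "\<forall>V\<in>QU U'. Cmp (Phi U) h (snd (PhiR U U') (gg x U' V)) = Cmp (Phi U) (gg x U V) (Idm (Phi U) (sb x U V))"
    using h(2) cat_idr[OF cat[OF U(1)] trivS_arr[OF ty]] by simp
  then show ?thesis unfolding aG_def
    using cmpr_eq[where \<gamma>="\<lambda>V. snd (PhiR U U') (gg x U' V)", OF gpd[OF U(1)] V0 trivS_arr[OF tx V0] h(1)] by simp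
qed

definition Gobj :: "('o,'m) lobj \<Rightarrow> ('o,'m) lobj" where
  "Gobj x = (\<lambda>U. if U \<in> P then ga x U else undefined,
             \<lambda>U U'. if U \<in> P \<and> U' \<in> P \<and> U \<subseteq> U' then aG x U U' else undefined)"

lemma Gobj_simps: "fst (Gobj x) U = (if U \<in> P then ga x U else undefined)"
  "snd (Gobj x) U U' = (if U \<in> P \<and> U' \<in> P \<and> U \<subseteq> U' then aG x U U' else undefined)"
  by (simp_all add: Gobj_def)

lemma Gobj_lo: assumes x: "lim_obj Q Phi PhiR x" shows "lim_obj P Phi PhiR (Gobj x)"
proof (rule loI)
  fix U assume "U \<in> P" then show "fst (Gobj x) U \<in> Ob (Phi U)"
    using triv_ob[OF gtriv[OF x]] by (simp add: Gobj_simps)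
next
  fix U V assume U: "U \<in> P" "V \<in> P" "U \<subseteq> V"
  then show "arr (Phi U) (snd (Gobj x) U V) (fst (PhiR U V) (fst (Gobj x) V)) (fst (Gobj x) U)"
    using aG_prop(1)[OF x U] by (simp add: Gobj_simps)
next
  fix U assume U: "U \<in> P"
  have "aG x U U = Idm (Phi U) (ga x U)"
  proof (rule aG_eq[OF x U U order_refl])
    show "arr (Phi U) (Idm (Phi U) (ga x U)) (fst (PhiR U U) (ga x U)) (ga x U)"
      using idob[OF U triv_ob[OF gtriv[OF x U]]] cat_id[OF cat[OF U] triv_ob[OF gtriv[OF x U]]] by simp
    fix V assume V: "V \<in> QU U"
    show "Cmp (Phi U) (Idm (Phi U) (ga x U)) (snd (PhiR U U) (gg x U V)) = gg x U V"
      using idar[OF U triv_arr[OF gtriv[OF x U] V]] cat_idl[OF cat[OF U] triv_arr[OF gtriv[OF x U] V]] by simp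
  qed
  then show "snd (Gobj x) U U = Idm (Phi U) (fst (Gobj x) U)" using U by (simp add: Gobj_simps)
next
  fix U V W assume U: "U \<in> P" and V: "V \<in> P" and W: "W \<in> P" and UV: "U \<subseteq> V" and VW: "V \<subseteq> W"
  have UW: "U \<subseteq> W" using UV VW by blast
  have c: "category (Phi U)" using cat[OF U] .
  have FV: "is_functor (Phi V) (Phi U) (PhiR U V)" using rfun[OF U V UV] .
  have aVW: "arr (Phi V) (aG x V W) (fst (PhiR V W) (ga x W)) (ga x V)" using aG_prop(1)[OF x V W VW] .
  have aUV: "arr (Phi U) (aG x U V) (fst (PhiR U V) (ga x V)) (ga x U)" using aG_prop(1)[OF x U V UV] .
  have gW: "ga x W \<in> Ob (Phi W)" using triv_ob[OF gtriv[OF x W]] .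
  have PaVW: "arr (Phi U) (snd (PhiR U V) (aG x V W)) (fst (PhiR U W) (ga x W)) (fst (PhiR U V) (ga x V))"
    using fun_arr[OF FV aVW] compob[OF U V W UV VW gW] by simp
  have "aG x U W = Cmp (Phi U) (aG x U V) (snd (PhiR U V) (aG x V W))"
  proof (rule aG_eq[OF x U W UW])
    show "arr (Phi U) (Cmp (Phi U) (aG x U V) (snd (PhiR U V) (aG x V W))) (fst (PhiR U W) (ga x W)) (ga x U)"
      using cat_comp[OF c PaVW aUV] .
    fix X assume X: "X \<in> QU W"
    have gX: "arr (Phi W) (gg x W X) (sb x W X) (ga x W)" using triv_arr[OF gtriv[OF x W] X] .
    have PgX: "arr (Phi V) (snd (PhiR V W) (gg x W X)) (fst (PhiR V W) (sb x W X)) (fst (PhiR V W) (ga x W))"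
      using fun_arr[OF rfun[OF V W VW] gX] .
    have PPgX: "arr (Phi U) (snd (PhiR U V) (snd (PhiR V W) (gg x W X))) (fst (PhiR U V) (fst (PhiR V W) (sb x W X))) (fst (PhiR U V) (fst (PhiR V W) (ga x W)))"
      using fun_arr[OF FV PgX] .
    have e0: "snd (PhiR U W) (gg x W X) = snd (PhiR U V) (snd (PhiR V W) (gg x W X))"
      using comparr[OF U V W UV VW gX] .
    have PaVW': "arr (Phi U) (snd (PhiR U V) (aG x V W)) (fst (PhiR U V) (fst (PhiR V W) (ga x W))) (fst (PhiR U V) (ga x V))"
      using fun_arr[OF FV aVW] .
    have "Cmp (Phi U) (Cmp (Phi U) (aG x U V) (snd (PhiR U V) (aG x V W))) (snd (PhiR U W) (gg x W X))
        = Cmp (Phi U) (aG x U V) (Cmp (Phi U) (snd (PhiR U V) (aG x V W)) (snd (PhiR U V) (snd (PhiR V W) (gg x W X))))"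
      using e0 cat_assoc[OF c PPgX PaVW' aUV] by simp
    also have "Cmp (Phi U) (snd (PhiR U V) (aG x V W)) (snd (PhiR U V) (snd (PhiR V W) (gg x W X)))
        = snd (PhiR U V) (Cmp (Phi V) (aG x V W) (snd (PhiR V W) (gg x W X)))"
      using fun_comp[OF FV PgX aVW] by simp
    also have "Cmp (Phi V) (aG x V W) (snd (PhiR V W) (gg x W X)) = gg x V X"
      using aG_prop(2)[OF x V W VW X] .
    also have "Cmp (Phi U) (aG x U V) (snd (PhiR U V) (gg x V X)) = gg x U X"
      using aG_prop(2)[OF x U V UV QU_mono[OF VW X]] .
    finally show "Cmp (Phi U) (Cmp (Phi U) (aG x U V) (snd (PhiR U V) (aG x V W))) (snd (PhiR U W) (gg x W X)) = gg x U X" .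
  qed
  then show "snd (Gobj x) U W = Cmp (Phi U) (snd (Gobj x) U V) (snd (PhiR U V) (snd (Gobj x) V W))"
    using U V W UV VW UW by (simp add: Gobj_simps)
next
  fix U assume "U \<notin> P" then show "fst (Gobj x) U = undefined" by (simp add: Gobj_simps)
next
  fix U V assume "\<not> (U \<in> P \<and> V \<in> P \<and> U \<subseteq> V)" then show "snd (Gobj x) U V = undefined"
    by (simp only: Gobj_simps if_False)
qed

end


context main
begin

definition gG :: "('o,'m) larr \<Rightarrow> nat set \<Rightarrow> 'm" where
  "gG f U = cmpr (Phi U) (QU U) (ga (fst f) U) (gg (fst f) U) (ga (fst (snd f)) U) (gg (fst (snd f)) U)
     (\<lambda>V. snd (PhiR U V) (snd (snd f) V))"

lemma mor: assumes f: "lim_arr Q Phi PhiR f" and U: "U \<in> P"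
  shows "\<And>V. V \<in> QU U \<Longrightarrow> arr (Phi U) (snd (PhiR U V) (snd (snd f) V)) (sb (fst f) U V) (sb (fst (snd f)) U V)"
    and "\<And>V W. V \<in> QU U \<Longrightarrow> W \<in> QU U \<Longrightarrow> V \<subseteq> W \<Longrightarrow>
       Cmp (Phi U) (sbeta (fst (snd f)) U V W) (snd (PhiR U W) (snd (snd f) W)) =
       Cmp (Phi U) (snd (PhiR U V) (snd (snd f) V)) (sbeta (fst f) U V W)"
proof -
  fix V assume V: "V \<in> QU U"
  have v: "U \<subseteq> V" "V \<in> P" "V \<in> Q" using QU_sub[OF U V] by auto
  show "arr (Phi U) (snd (PhiR U V) (snd (snd f) V)) (sb (fst f) U V) (sb (fst (snd f)) U V)"
    unfolding sb_def using fun_arr[OF rfun[OF U v(2) v(1)] Qc.la_arr[OF f v(3)]] .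
next
  fix V W assume V: "V \<in> QU U" and W: "W \<in> QU U" and VW: "V \<subseteq> W"
  have v: "U \<subseteq> V" "V \<in> P" "V \<in> Q" and w: "W \<in> P" "W \<in> Q" using QU_sub[OF U V] QU_sub[OF U W] by auto
  have F: "is_functor (Phi V) (Phi U) (PhiR U V)" using rfun[OF U v(2) v(1)] .
  have pW: "arr (Phi W) (snd (snd f) W) (fst (fst f) W) (fst (fst (snd f)) W)" using Qc.la_arr[OF f w(2)] .
  have pV: "arr (Phi V) (snd (snd f) V) (fst (fst f) V) (fst (fst (snd f)) V)" using Qc.la_arr[OF f v(3)] .
  have ay: "arr (Phi V) (snd (fst (snd f)) V W) (fst (PhiR V W) (fst (fst (snd f)) W)) (fst (fst (snd f)) V)"
    using Qc.lo_arr[OF Qc.la_o2[OF f] v(3) w(2) VW] .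
  have ax: "arr (Phi V) (snd (fst f) V W) (fst (PhiR V W) (fst (fst f) W)) (fst (fst f) V)"
    using Qc.lo_arr[OF Qc.la_o1[OF f] v(3) w(2) VW] .
  have PpW: "arr (Phi V) (snd (PhiR V W) (snd (snd f) W)) (fst (PhiR V W) (fst (fst f) W)) (fst (PhiR V W) (fst (fst (snd f)) W))"
    using fun_arr[OF rfun[OF v(2) w(1) VW] pW] .
  have "Cmp (Phi U) (sbeta (fst (snd f)) U V W) (snd (PhiR U W) (snd (snd f) W))
      = Cmp (Phi U) (snd (PhiR U V) (snd (fst (snd f)) V W)) (snd (PhiR U V) (snd (PhiR V W) (snd (snd f) W)))"
    unfolding sbeta_def using comparr[OF U v(2) w(1) v(1) VW pW] by simp
  also have "\<dots> = snd (PhiR U V) (Cmp (Phi V) (snd (fst (snd f)) V W) (snd (PhiR V W) (snd (snd f) W)))"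
    using fun_comp[OF F PpW ay] by simp
  also have "\<dots> = snd (PhiR U V) (Cmp (Phi V) (snd (snd f) V) (snd (fst f) V W))"
    using Qc.la_nat[OF f v(3) w(2) VW] by simp
  also have "\<dots> = Cmp (Phi U) (snd (PhiR U V) (snd (snd f) V)) (sbeta (fst f) U V W)"
    unfolding sbeta_def using fun_comp[OF F ax pV] .
  finally show "Cmp (Phi U) (sbeta (fst (snd f)) U V W) (snd (PhiR U W) (snd (snd f) W)) =
       Cmp (Phi U) (snd (PhiR U V) (snd (snd f) V)) (sbeta (fst f) U V W)" .
qed

lemma gG_prop: assumes f: "lim_arr Q Phi PhiR f" and U: "U \<in> P"
  shows "arr (Phi U) (gG f U) (ga (fst f) U) (ga (fst (snd f)) U)"
    and "\<And>V. V \<in> QU U \<Longrightarrow> Cmp (Phi U) (gG f U) (gg (fst f) U V) = Cmp (Phi U) (gg (fst (snd f)) U V) (snd (PhiR U V) (snd (snd f) V))"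
proof -
  obtain cc where V0: "N - {cc} \<in> QU U" using QU_ne[OF U] by blast
  have x: "lim_obj Q Phi PhiR (fst f)" and y: "lim_obj Q Phi PhiR (fst (snd f))" using Qc.la_o1[OF f] Qc.la_o2[OF f] .
  have tx: "trivS (fst f) U U (ga (fst f) U) (gg (fst f) U)" using triv_S[OF gtriv[OF x U] order_refl] .
  have ty: "trivS (fst (snd f)) U U (ga (fst (snd f)) U) (gg (fst (snd f)) U)" using triv_S[OF gtriv[OF y U] order_refl] .
  have P: "arr (Phi U) (gG f U) (ga (fst f) U) (ga (fst (snd f)) U) \<and>
    (\<forall>V\<in>QU U. Cmp (Phi U) (gG f U) (gg (fst f) U V) = Cmp (Phi U) (gg (fst (snd f)) U V) (snd (PhiR U V) (snd (snd f) V)))"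
    unfolding gG_def
    by (rule cmpr_prop[OF gpd[OF U] V0 trivS_arr[OF tx V0] cmp_ex[OF x y U U order_refl tx ty mor[OF f U]]])
  show "arr (Phi U) (gG f U) (ga (fst f) U) (ga (fst (snd f)) U)" using P by blast
  fix V assume "V \<in> QU U" then show "Cmp (Phi U) (gG f U) (gg (fst f) U V) = Cmp (Phi U) (gg (fst (snd f)) U V) (snd (PhiR U V) (snd (snd f) V))"
    using P by blast
qed

lemma gG_eq: assumes f: "lim_arr Q Phi PhiR f" and U: "U \<in> P"
  and h: "arr (Phi U) h (ga (fst f) U) (ga (fst (snd f)) U)"
    "\<And>V. V \<in> QU U \<Longrightarrow> Cmp (Phi U) h (gg (fst f) U V) = Cmp (Phi U) (gg (fst (snd f)) U V) (snd (PhiR U V) (snd (snd f) V))"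
  shows "gG f U = h"
proof -
  obtain cc where V0: "N - {cc} \<in> QU U" using QU_ne[OF U] by blast
  have x: "lim_obj Q Phi PhiR (fst f)" using Qc.la_o1[OF f] .
  show ?thesis unfolding gG_def
    by (rule cmpr_eq[where \<gamma>="gg (fst f) U", OF gpd[OF U] V0 triv_arr[OF gtriv[OF x U] V0] h(1)]) (use h(2) in blast)
qed

definition Garr :: "('o,'m) larr \<Rightarrow> ('o,'m) larr" where
  "Garr f = (Gobj (fst f), Gobj (fst (snd f)), \<lambda>U. if U \<in> P then gG f U else undefined)"

lemma Garr_la: assumes f: "lim_arr Q Phi PhiR f" shows "lim_arr P Phi PhiR (Garr f)"
proof (rule laI)
  have x: "lim_obj Q Phi PhiR (fst f)" and y: "lim_obj Q Phi PhiR (fst (snd f))" using Qc.la_o1[OF f] Qc.la_o2[OF f] .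
  show "lim_obj P Phi PhiR (fst (Garr f))" "lim_obj P Phi PhiR (fst (snd (Garr f)))"
    using Gobj_lo[OF x] Gobj_lo[OF y] by (simp_all add: Garr_def)
next
  fix U assume "U \<in> P" then show "arr (Phi U) (snd (snd (Garr f)) U) (fst (fst (Garr f)) U) (fst (fst (snd (Garr f))) U)"
    using gG_prop(1)[OF f] by (simp add: Garr_def Gobj_simps)
next
  fix U U' assume U: "U \<in> P" "U' \<in> P" "U \<subseteq> U'"
  define x where "x = fst f"
  define y where "y = fst (snd f)"
  define p where "p = snd (snd f)"
  have xx: "lim_obj Q Phi PhiR x" and yy: "lim_obj Q Phi PhiR y" using Qc.la_o1[OF f] Qc.la_o2[OF f] x_def y_def by auto
  have g: "groupoid (Phi U)" and c: "category (Phi U)" using gpd[OF U(1)] cat[OF U(1)] .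
  have F: "is_functor (Phi U') (Phi U) (PhiR U U')" using rfun[OF U] .
  obtain V where V: "N - {V} \<in> QU U'" using QU_ne[OF U(2)] by blast
  define W where "W = N - {V}"
  have W: "W \<in> QU U'" using V W_def by simp
  have W1: "W \<in> QU U" using QU_mono[OF U(3) W] .
  have w: "U' \<subseteq> W" "W \<in> P" "W \<in> Q" using QU_sub[OF U(2) W] by auto
  have gxU': "arr (Phi U') (gg x U' W) (sb x U' W) (ga x U')" using triv_arr[OF gtriv[OF xx U(2)] W] .
  have gyU': "arr (Phi U') (gg y U' W) (sb y U' W) (ga y U')" using triv_arr[OF gtriv[OF yy U(2)] W] .
  have gyU: "arr (Phi U) (gg y U W) (sb y U W) (ga y U)" using triv_arr[OF gtriv[OF yy U(1)] W1] .
  have gam: "arr (Phi U) (snd (PhiR U U') (gg x U' W)) (sb x U W) (fst (PhiR U U') (ga x U'))"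
    using fun_arr[OF F gxU'] sb_push[OF xx U W] by simp
  have gamy: "arr (Phi U) (snd (PhiR U U') (gg y U' W)) (sb y U W) (fst (PhiR U U') (ga y U'))"
    using fun_arr[OF F gyU'] sb_push[OF yy U W] by simp
  have aGx: "arr (Phi U) (aG x U U') (fst (PhiR U U') (ga x U')) (ga x U)" using aG_prop(1)[OF xx U] .
  have aGy: "arr (Phi U) (aG y U U') (fst (PhiR U U') (ga y U')) (ga y U)" using aG_prop(1)[OF yy U] .
  have gGU: "arr (Phi U) (gG f U) (ga x U) (ga y U)" using gG_prop(1)[OF f U(1)] x_def y_def by simp
  have gGU': "arr (Phi U') (gG f U') (ga x U') (ga y U')" using gG_prop(1)[OF f U(2)] x_def y_def by simp
  have PgGU': "arr (Phi U) (snd (PhiR U U') (gG f U')) (fst (PhiR U U') (ga x U')) (fst (PhiR U U') (ga y U'))"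
    using fun_arr[OF F gGU'] .
  have pW: "arr (Phi W) (p W) (fst x W) (fst y W)" using Qc.la_arr[OF f w(3)] x_def y_def p_def by simp
  have PpW: "arr (Phi U') (snd (PhiR U' W) (p W)) (sb x U' W) (sb y U' W)"
    unfolding sb_def using fun_arr[OF rfun[OF U(2) w(2) w(1)] pW] .
  have PPpW: "snd (PhiR U U') (snd (PhiR U' W) (p W)) = snd (PhiR U W) (p W)"
    using comparr[OF U(1,2) w(2) U(3) w(1) pW] by simp
  have L: "Cmp (Phi U) (Cmp (Phi U) (gG f U) (aG x U U')) (snd (PhiR U U') (gg x U' W))
      = Cmp (Phi U) (gg y U W) (snd (PhiR U W) (p W))"
  proof -
    have "Cmp (Phi U) (Cmp (Phi U) (gG f U) (aG x U U')) (snd (PhiR U U') (gg x U' W))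
        = Cmp (Phi U) (gG f U) (Cmp (Phi U) (aG x U U') (snd (PhiR U U') (gg x U' W)))"
      using cat_assoc[OF c gam aGx gGU] by simp
    also have "\<dots> = Cmp (Phi U) (gG f U) (gg x U W)" using aG_prop(2)[OF xx U W] by simp
    also have "\<dots> = Cmp (Phi U) (gg y U W) (snd (PhiR U W) (p W))"
      using gG_prop(2)[OF f U(1) W1] x_def y_def p_def by simp
    finally show ?thesis .
  qed
  have R: "Cmp (Phi U) (Cmp (Phi U) (aG y U U') (snd (PhiR U U') (gG f U'))) (snd (PhiR U U') (gg x U' W))
      = Cmp (Phi U) (gg y U W) (snd (PhiR U W) (p W))"
  proof -
    have "Cmp (Phi U) (Cmp (Phi U) (aG y U U') (snd (PhiR U U') (gG f U'))) (snd (PhiR U U') (gg x U' W))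
        = Cmp (Phi U) (aG y U U') (Cmp (Phi U) (snd (PhiR U U') (gG f U')) (snd (PhiR U U') (gg x U' W)))"
      using cat_assoc[OF c gam PgGU' aGy] by simp
    also have "Cmp (Phi U) (snd (PhiR U U') (gG f U')) (snd (PhiR U U') (gg x U' W))
        = snd (PhiR U U') (Cmp (Phi U') (gG f U') (gg x U' W))"
      using fun_comp[OF F gxU' gGU'] by simp
    also have "Cmp (Phi U') (gG f U') (gg x U' W) = Cmp (Phi U') (gg y U' W) (snd (PhiR U' W) (p W))"
      using gG_prop(2)[OF f U(2) W] x_def y_def p_def by simp
    also have "snd (PhiR U U') (Cmp (Phi U') (gg y U' W) (snd (PhiR U' W) (p W)))
        = Cmp (Phi U) (snd (PhiR U U') (gg y U' W)) (snd (PhiR U W) (p W))"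
      using fun_comp[OF F PpW gyU'] PPpW by simp
    also have "Cmp (Phi U) (aG y U U') (Cmp (Phi U) (snd (PhiR U U') (gg y U' W)) (snd (PhiR U W) (p W)))
        = Cmp (Phi U) (Cmp (Phi U) (aG y U U') (snd (PhiR U U') (gg y U' W))) (snd (PhiR U W) (p W))"
      using cat_assoc[OF c _ gamy aGy] fun_arr[OF F PpW] PPpW sb_push[OF xx U W] sb_push[OF yy U W] by metis
    also have "\<dots> = Cmp (Phi U) (gg y U W) (snd (PhiR U W) (p W))" using aG_prop(2)[OF yy U W] by simp
    finally show ?thesis .
  qed
  have e: "Cmp (Phi U) (gG f U) (aG x U U') = Cmp (Phi U) (aG y U U') (snd (PhiR U U') (gG f U'))"
    using cancel_r[OF g gam cat_comp[OF c aGx gGU] cat_comp[OF c PgGU' aGy]] L R by simp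
  show "Cmp (Phi U) (snd (snd (Garr f)) U) (snd (fst (Garr f)) U U') =
          Cmp (Phi U) (snd (fst (snd (Garr f))) U U') (snd (PhiR U U') (snd (snd (Garr f)) U'))"
    using e U x_def y_def by (simp add: Garr_def Gobj_simps)
next
  fix U assume "U \<notin> P" then show "snd (snd (Garr f)) U = undefined" by (simp add: Garr_def)
qed

end


context main
begin

abbreviation "TP \<equiv> twolim P Phi PhiR"
abbreviation "TQ \<equiv> twolim Q Phi PhiR"
abbreviation "Gf \<equiv> (Gobj, Garr)"

lemma G_functor: "is_functor TQ TP Gf"
proof -
  have c: "category TQ" "category TP" using Qc.T_category T_category by auto
  have ob: "\<forall>x\<in>Ob TQ. fst Gf x \<in> Ob TP" using Gobj_lo by (simp add: T_simps Qc.T_simps)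
  have ar: "\<forall>f\<in>Ar TQ. snd Gf f \<in> Ar TP \<and> Dom TP (snd Gf f) = fst Gf (Dom TQ f) \<and> Cod TP (snd Gf f) = fst Gf (Cod TQ f)"
    using Garr_la by (simp add: T_simps Qc.T_simps Garr_def)
  have cm: "snd Gf (Cmp TQ g f) = Cmp TP (snd Gf g) (snd Gf f)"
    if f: "f \<in> Ar TQ" and g: "g \<in> Ar TQ" and e: "Cod TQ f = Dom TQ g" for f g
  proof -
    have fl: "lim_arr Q Phi PhiR f" and gl: "lim_arr Q Phi PhiR g" using f g by (simp_all add: Qc.T_simps)
    have e': "fst (snd f) = fst g" using e by (simp add: Qc.T_simps)
    have hl: "lim_arr Q Phi PhiR (Cmp TQ g f)" using Qc.T_comp_closed[OF fl gl e'] .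
    have comp: "gG (Cmp TQ g f) U = Cmp (Phi U) (gG g U) (gG f U)" if U: "U \<in> P" for U
    proof (rule gG_eq[OF hl U])
      have c: "category (Phi U)" using cat[OF U] .
      have a1: "arr (Phi U) (gG f U) (ga (fst f) U) (ga (fst g) U)" using gG_prop(1)[OF fl U] e' by simp
      have a2: "arr (Phi U) (gG g U) (ga (fst g) U) (ga (fst (snd g)) U)" using gG_prop(1)[OF gl U] .
      show "arr (Phi U) (Cmp (Phi U) (gG g U) (gG f U)) (ga (fst (Cmp TQ g f)) U) (ga (fst (snd (Cmp TQ g f))) U)"
        using cat_comp[OF c a1 a2] by (simp add: Qc.T_simps)
      fix V assume V: "V \<in> QU U"
      have v: "U \<subseteq> V" "V \<in> P" "V \<in> Q" using QU_sub[OF U V] by auto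
      have F: "is_functor (Phi V) (Phi U) (PhiR U V)" using rfun[OF U v(2) v(1)] .
      have x: "lim_obj Q Phi PhiR (fst f)" using Qc.la_o1[OF fl] .
      have gx: "arr (Phi U) (gg (fst f) U V) (sb (fst f) U V) (ga (fst f) U)" using triv_arr[OF gtriv[OF x U] V] .
      have gy: "arr (Phi U) (gg (fst g) U V) (sb (fst g) U V) (ga (fst g) U)"
        using triv_arr[OF gtriv[OF Qc.la_o1[OF gl] U] V] .
      have gz: "arr (Phi U) (gg (fst (snd g)) U V) (sb (fst (snd g)) U V) (ga (fst (snd g)) U)"
        using triv_arr[OF gtriv[OF Qc.la_o2[OF gl] U] V] .
      have pV: "arr (Phi V) (snd (snd f) V) (fst (fst f) V) (fst (fst g) V)" using Qc.la_arr[OF fl v(3)] e' by simp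
      have qV: "arr (Phi V) (snd (snd g) V) (fst (fst g) V) (fst (fst (snd g)) V)" using Qc.la_arr[OF gl v(3)] .
      have Pp: "arr (Phi U) (snd (PhiR U V) (snd (snd f) V)) (sb (fst f) U V) (sb (fst g) U V)"
        unfolding sb_def using fun_arr[OF F pV] .
      have Pq: "arr (Phi U) (snd (PhiR U V) (snd (snd g) V)) (sb (fst g) U V) (sb (fst (snd g)) U V)"
        unfolding sb_def using fun_arr[OF F qV] .
      have "Cmp (Phi U) (Cmp (Phi U) (gG g U) (gG f U)) (gg (fst f) U V) = Cmp (Phi U) (gG g U) (Cmp (Phi U) (gG f U) (gg (fst f) U V))"
        using cat_assoc[OF c gx a1 a2] by simp
      also have "\<dots> = Cmp (Phi U) (gG g U) (Cmp (Phi U) (gg (fst g) U V) (snd (PhiR U V) (snd (snd f) V)))"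
        using gG_prop(2)[OF fl U V] e' by simp
      also have "\<dots> = Cmp (Phi U) (Cmp (Phi U) (gG g U) (gg (fst g) U V)) (snd (PhiR U V) (snd (snd f) V))"
        using cat_assoc[OF c Pp gy a2] by simp
      also have "\<dots> = Cmp (Phi U) (Cmp (Phi U) (gg (fst (snd g)) U V) (snd (PhiR U V) (snd (snd g) V))) (snd (PhiR U V) (snd (snd f) V))"
        using gG_prop(2)[OF gl U V] by simp
      also have "\<dots> = Cmp (Phi U) (gg (fst (snd g)) U V) (Cmp (Phi U) (snd (PhiR U V) (snd (snd g) V)) (snd (PhiR U V) (snd (snd f) V)))"
        using cat_assoc[OF c Pp Pq gz] by simp
      also have "Cmp (Phi U) (snd (PhiR U V) (snd (snd g) V)) (snd (PhiR U V) (snd (snd f) V)) = snd (PhiR U V) (snd (snd (Cmp TQ g f)) V)"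
        using fun_comp[OF F pV qV] v(3) by (simp add: Qc.T_simps)
      finally show "Cmp (Phi U) (Cmp (Phi U) (gG g U) (gG f U)) (gg (fst (Cmp TQ g f)) U V) =
          Cmp (Phi U) (gg (fst (snd (Cmp TQ g f))) U V) (snd (PhiR U V) (snd (snd (Cmp TQ g f)) V))"
        by (simp add: Qc.T_simps)
    qed
    show ?thesis using comp by (auto simp: T_simps Qc.T_simps Garr_def intro!: ext)
  qed
  have idm: "snd Gf (Idm TQ x) = Idm TP (fst Gf x)" if xo: "x \<in> Ob TQ" for x
  proof -
    have x: "lim_obj Q Phi PhiR x" using xo by (simp add: Qc.T_simps)
    have il: "lim_arr Q Phi PhiR (Idm TQ x)" using Qc.T_id_arr[OF x] .
    have e: "gG (Idm TQ x) U = Idm (Phi U) (ga x U)" if U: "U \<in> P" for U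
    proof (rule gG_eq[OF il U])
      have c: "category (Phi U)" using cat[OF U] .
      show "arr (Phi U) (Idm (Phi U) (ga x U)) (ga (fst (Idm TQ x)) U) (ga (fst (snd (Idm TQ x))) U)"
        using cat_id[OF c triv_ob[OF gtriv[OF x U]]] by (simp add: Qc.T_simps)
      fix V assume V: "V \<in> QU U"
      have v: "U \<subseteq> V" "V \<in> P" "V \<in> Q" using QU_sub[OF U V] by auto
      have gx: "arr (Phi U) (gg x U V) (sb x U V) (ga x U)" using triv_arr[OF gtriv[OF x U] V] .
      have "snd (PhiR U V) (snd (snd (Idm TQ x)) V) = Idm (Phi U) (sb x U V)"
        using fun_id[OF rfun[OF U v(2) v(1)] Qc.lo_ob[OF x v(3)]] v(3) by (simp add: Qc.T_simps sb_def)
      then show "Cmp (Phi U) (Idm (Phi U) (ga x U)) (gg (fst (Idm TQ x)) U V) =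
          Cmp (Phi U) (gg (fst (snd (Idm TQ x))) U V) (snd (PhiR U V) (snd (snd (Idm TQ x)) V))"
        using cat_idl[OF c gx] cat_idr[OF c gx] by (simp add: Qc.T_simps)
    qed
    show ?thesis using e by (auto simp: T_simps Qc.T_simps Garr_def Gobj_simps intro!: ext)
  qed
  show ?thesis unfolding is_functor_def using c ob ar cm idm by blast
qed

end


context main
begin

lemma triv_selfP: assumes y: "lim_obj P Phi PhiR y" and U: "U \<in> P"
  shows "triv (restr_obj Q y) U (fst y U) (snd y U)"
  unfolding triv_def
proof (intro conjI ballI impI)
  show "fst y U \<in> Ob (Phi U)" using lo_ob[OF y U] .
next
  fix V assume V: "V \<in> QU U"
  have v: "U \<subseteq> V" "V \<in> P" "V \<in> Q" using QU_sub[OF U V] by auto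
  show "arr (Phi U) (snd y U V) (sb (restr_obj Q y) U V) (fst y U)"
    using lo_arr[OF y U v(2) v(1)] v(3) by (simp add: sb_def restr_simps)
next
  fix V W assume V: "V \<in> QU U" and W: "W \<in> QU U" and VW: "V \<subseteq> W"
  have v: "U \<subseteq> V" "V \<in> P" "V \<in> Q" and w: "W \<in> P" "W \<in> Q" using QU_sub[OF U V] QU_sub[OF U W] by auto
  show "snd y U W = Cmp (Phi U) (snd y U V) (sbeta (restr_obj Q y) U V W)"
    using lo_coc[OF y U v(2) w(1) v(1) VW] v(3) w(2) VW by (simp add: sbeta_def restr_simps)
qed

lemma triv_selfQ: assumes x: "lim_obj Q Phi PhiR x" and U: "U \<in> Q"
  shows "triv x U (fst x U) (snd x U)"
  unfolding triv_def
proof (intro conjI ballI impI)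
  show "fst x U \<in> Ob (Phi U)" using Qc.lo_ob[OF x U] .
next
  fix V assume V: "V \<in> QU U"
  have v: "U \<subseteq> V" "V \<in> Q" using V QU_iff by auto
  show "arr (Phi U) (snd x U V) (sb x U V) (fst x U)"
    using Qc.lo_arr[OF x U v(2) v(1)] by (simp add: sb_def)
next
  fix V W assume V: "V \<in> QU U" and W: "W \<in> QU U" and VW: "V \<subseteq> W"
  have v: "U \<subseteq> V" "V \<in> Q" and w: "W \<in> Q" using V W QU_iff by auto
  show "snd x U W = Cmp (Phi U) (snd x U V) (sbeta x U V W)"
    using Qc.lo_coc[OF x U v(2) w v(1) VW] by (simp add: sbeta_def)
qed

lemma restr_Q_lo: "lim_obj P Phi PhiR y \<Longrightarrow> lim_obj Q Phi PhiR (restr_obj Q y)"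
  using restr_lo[OF Q_sub] .

definition eC :: "('o,'m) lobj \<Rightarrow> nat set \<Rightarrow> 'm" where
  "eC y U = cmpr (Phi U) (QU U) (fst y U) (snd y U) (ga (restr_obj Q y) U) (gg (restr_obj Q y) U)
     (\<lambda>V. Idm (Phi U) (sb (restr_obj Q y) U V))"

lemma eC_prop: assumes y: "lim_obj P Phi PhiR y" and U: "U \<in> P"
  shows "arr (Phi U) (eC y U) (fst y U) (ga (restr_obj Q y) U)"
    and "\<And>V. V \<in> QU U \<Longrightarrow> Cmp (Phi U) (eC y U) (snd y U V) = gg (restr_obj Q y) U V"
proof -
  define r where "r = restr_obj Q y"
  have r: "lim_obj Q Phi PhiR r" using restr_Q_lo[OF y] r_def by simp
  obtain cc where V0: "N - {cc} \<in> QU U" using QU_ne[OF U] by blast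
  have tx: "trivS r U U (fst y U) (snd y U)" using triv_S[OF triv_selfP[OF y U] order_refl] r_def by simp
  have ty: "trivS r U U (ga r U) (gg r U)" using triv_S[OF gtriv[OF r U] order_refl] .
  have PP: "arr (Phi U) (eC y U) (fst y U) (ga r U) \<and>
    (\<forall>V\<in>QU U. Cmp (Phi U) (eC y U) (snd y U V) = Cmp (Phi U) (gg r U V) (Idm (Phi U) (sb r U V)))"
    unfolding eC_def r_def[symmetric]
    by (rule cmpr_prop[OF gpd[OF U] V0 trivS_arr[OF tx V0] cmp_ex[OF r r U U order_refl tx ty idmor[OF r U U order_refl]]])
  show "arr (Phi U) (eC y U) (fst y U) (ga (restr_obj Q y) U)" using PP r_def by simp
  fix V assume V: "V \<in> QU U"
  show "Cmp (Phi U) (eC y U) (snd y U V) = gg (restr_obj Q y) U V"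
    using PP V cat_idr[OF cat[OF U] trivS_arr[OF ty V]] r_def by simp
qed

definition eta :: "('o,'m) lobj \<Rightarrow> ('o,'m) larr" where
  "eta y = (y, Gobj (restr_obj Q y), \<lambda>U. if U \<in> P then eC y U else undefined)"

lemma eta_la: assumes y: "lim_obj P Phi PhiR y" shows "lim_arr P Phi PhiR (eta y)"
proof (rule laI)
  show "lim_obj P Phi PhiR (fst (eta y))" using y by (simp add: eta_def)
  show "lim_obj P Phi PhiR (fst (snd (eta y)))" using Gobj_lo[OF restr_Q_lo[OF y]] by (simp add: eta_def)
next
  fix U assume "U \<in> P" then show "arr (Phi U) (snd (snd (eta y)) U) (fst (fst (eta y)) U) (fst (fst (snd (eta y))) U)"
    using eC_prop(1)[OF y] by (simp add: eta_def Gobj_simps)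
next
  fix U U' assume U: "U \<in> P" "U' \<in> P" "U \<subseteq> U'"
  define r where "r = restr_obj Q y"
  have r: "lim_obj Q Phi PhiR r" using restr_Q_lo[OF y] r_def by simp
  have g: "groupoid (Phi U)" and c: "category (Phi U)" using gpd[OF U(1)] cat[OF U(1)] .
  have F: "is_functor (Phi U') (Phi U) (PhiR U U')" using rfun[OF U] .
  obtain cc where V: "N - {cc} \<in> QU U'" using QU_ne[OF U(2)] by blast
  define W where "W = N - {cc}"
  have W: "W \<in> QU U'" using V W_def by simp
  have W1: "W \<in> QU U" using QU_mono[OF U(3) W] .
  have w: "U' \<subseteq> W" "W \<in> P" "W \<in> Q" using QU_sub[OF U(2) W] by auto
  have aU'W: "arr (Phi U') (snd y U' W) (sb r U' W) (fst y U')"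
    using lo_arr[OF y U(2) w(2) w(1)] w(3) by (simp add: sb_def r_def restr_simps)
  have gam: "arr (Phi U) (snd (PhiR U U') (snd y U' W)) (sb r U W) (fst (PhiR U U') (fst y U'))"
    using fun_arr[OF F aU'W] sb_push[OF r U W] by simp
  have aUU': "arr (Phi U) (snd y U U') (fst (PhiR U U') (fst y U')) (fst y U)" using lo_arr[OF y U] .
  have eU: "arr (Phi U) (eC y U) (fst y U) (ga r U)" using eC_prop(1)[OF y U(1)] r_def by simp
  have eU': "arr (Phi U') (eC y U') (fst y U') (ga r U')" using eC_prop(1)[OF y U(2)] r_def by simp
  have PeU': "arr (Phi U) (snd (PhiR U U') (eC y U')) (fst (PhiR U U') (fst y U')) (fst (PhiR U U') (ga r U'))"
    using fun_arr[OF F eU'] .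
  have aG: "arr (Phi U) (aG r U U') (fst (PhiR U U') (ga r U')) (ga r U)" using aG_prop(1)[OF r U] .
  have L: "Cmp (Phi U) (Cmp (Phi U) (eC y U) (snd y U U')) (snd (PhiR U U') (snd y U' W)) = gg r U W"
  proof -
    have "Cmp (Phi U) (Cmp (Phi U) (eC y U) (snd y U U')) (snd (PhiR U U') (snd y U' W))
        = Cmp (Phi U) (eC y U) (Cmp (Phi U) (snd y U U') (snd (PhiR U U') (snd y U' W)))"
      using cat_assoc[OF c gam aUU' eU] by simp
    also have "Cmp (Phi U) (snd y U U') (snd (PhiR U U') (snd y U' W)) = snd y U W"
      using lo_coc[OF y U(1,2) w(2) U(3) w(1)] by simp
    also have "Cmp (Phi U) (eC y U) (snd y U W) = gg r U W" using eC_prop(2)[OF y U(1) W1] r_def by simp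
    finally show ?thesis .
  qed
  have R: "Cmp (Phi U) (Cmp (Phi U) (aG r U U') (snd (PhiR U U') (eC y U'))) (snd (PhiR U U') (snd y U' W)) = gg r U W"
  proof -
    have "Cmp (Phi U) (Cmp (Phi U) (aG r U U') (snd (PhiR U U') (eC y U'))) (snd (PhiR U U') (snd y U' W))
        = Cmp (Phi U) (aG r U U') (Cmp (Phi U) (snd (PhiR U U') (eC y U')) (snd (PhiR U U') (snd y U' W)))"
      using cat_assoc[OF c gam PeU' aG] by simp
    also have "Cmp (Phi U) (snd (PhiR U U') (eC y U')) (snd (PhiR U U') (snd y U' W))
        = snd (PhiR U U') (Cmp (Phi U') (eC y U') (snd y U' W))"
      using fun_comp[OF F aU'W eU'] by simp
    also have "Cmp (Phi U') (eC y U') (snd y U' W) = gg r U' W" using eC_prop(2)[OF y U(2) W] r_def by simp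
    also have "Cmp (Phi U) (aG r U U') (snd (PhiR U U') (gg r U' W)) = gg r U W" using aG_prop(2)[OF r U W] .
    finally show ?thesis .
  qed
  have e: "Cmp (Phi U) (eC y U) (snd y U U') = Cmp (Phi U) (aG r U U') (snd (PhiR U U') (eC y U'))"
    using cancel_r[OF g gam cat_comp[OF c aUU' eU] cat_comp[OF c PeU' aG]] L R by simp
  show "Cmp (Phi U) (snd (snd (eta y)) U) (snd (fst (eta y)) U U') =
          Cmp (Phi U) (snd (fst (snd (eta y))) U U') (snd (PhiR U U') (snd (snd (eta y)) U'))"
    using e U r_def by (simp add: eta_def Gobj_simps)
next
  fix U assume "U \<notin> P" then show "snd (snd (eta y)) U = undefined" by (simp add: eta_def)
qed

definition kC :: "('o,'m) lobj \<Rightarrow> nat set \<Rightarrow> 'm" where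
  "kC x U = cmpr (Phi U) (QU U) (ga x U) (gg x U) (fst x U) (snd x U) (\<lambda>V. Idm (Phi U) (sb x U V))"

lemma kC_prop: assumes x: "lim_obj Q Phi PhiR x" and UQ: "U \<in> Q"
  shows "arr (Phi U) (kC x U) (ga x U) (fst x U)"
    and "\<And>V. V \<in> QU U \<Longrightarrow> Cmp (Phi U) (kC x U) (gg x U V) = snd x U V"
proof -
  have U: "U \<in> P" using UQ Q_sub by auto
  obtain cc where V0: "N - {cc} \<in> QU U" using QU_ne[OF U] by blast
  have ty: "trivS x U U (fst x U) (snd x U)" using triv_S[OF triv_selfQ[OF x UQ] order_refl] .
  have tx: "trivS x U U (ga x U) (gg x U)" using triv_S[OF gtriv[OF x U] order_refl] .
  have PP: "arr (Phi U) (kC x U) (ga x U) (fst x U) \<and>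
    (\<forall>V\<in>QU U. Cmp (Phi U) (kC x U) (gg x U V) = Cmp (Phi U) (snd x U V) (Idm (Phi U) (sb x U V)))"
    unfolding kC_def
    by (rule cmpr_prop[OF gpd[OF U] V0 trivS_arr[OF tx V0] cmp_ex[OF x x U U order_refl tx ty idmor[OF x U U order_refl]]])
  show "arr (Phi U) (kC x U) (ga x U) (fst x U)" using PP by simp
  fix V assume V: "V \<in> QU U"
  show "Cmp (Phi U) (kC x U) (gg x U V) = snd x U V"
    using PP V cat_idr[OF cat[OF U] trivS_arr[OF ty V]] by simp
qed

definition eps :: "('o,'m) lobj \<Rightarrow> ('o,'m) larr" where
  "eps x = (restr_obj Q (Gobj x), x, \<lambda>U. if U \<in> Q then kC x U else undefined)"

lemma eps_la: assumes x: "lim_obj Q Phi PhiR x" shows "lim_arr Q Phi PhiR (eps x)"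
proof (rule Qc.laI)
  show "lim_obj Q Phi PhiR (fst (eps x))" using restr_Q_lo[OF Gobj_lo[OF x]] by (simp add: eps_def)
  show "lim_obj Q Phi PhiR (fst (snd (eps x)))" using x by (simp add: eps_def)
next
  fix U assume U: "U \<in> Q" then show "arr (Phi U) (snd (snd (eps x)) U) (fst (fst (eps x)) U) (fst (fst (snd (eps x))) U)"
    using kC_prop(1)[OF x U] Q_sub by (auto simp: eps_def Gobj_simps restr_simps)
next
  fix U U' assume UQ: "U \<in> Q" "U' \<in> Q" "U \<subseteq> U'"
  have U: "U \<in> P" "U' \<in> P" "U \<subseteq> U'" using UQ Q_sub by auto
  have g: "groupoid (Phi U)" and c: "category (Phi U)" using gpd[OF U(1)] cat[OF U(1)] .
  have F: "is_functor (Phi U') (Phi U) (PhiR U U')" using rfun[OF U] .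
  obtain cc where V: "N - {cc} \<in> QU U'" using QU_ne[OF U(2)] by blast
  define W where "W = N - {cc}"
  have W: "W \<in> QU U'" using V W_def by simp
  have W1: "W \<in> QU U" using QU_mono[OF U(3) W] .
  have w: "U' \<subseteq> W" "W \<in> Q" using W QU_iff by auto
  have gU'W: "arr (Phi U') (gg x U' W) (sb x U' W) (ga x U')" using triv_arr[OF gtriv[OF x U(2)] W] .
  have gam: "arr (Phi U) (snd (PhiR U U') (gg x U' W)) (sb x U W) (fst (PhiR U U') (ga x U'))"
    using fun_arr[OF F gU'W] sb_push[OF x U W] by simp
  have aG: "arr (Phi U) (aG x U U') (fst (PhiR U U') (ga x U')) (ga x U)" using aG_prop(1)[OF x U] .
  have kU: "arr (Phi U) (kC x U) (ga x U) (fst x U)" using kC_prop(1)[OF x UQ(1)] .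
  have kU': "arr (Phi U') (kC x U') (ga x U') (fst x U')" using kC_prop(1)[OF x UQ(2)] .
  have PkU': "arr (Phi U) (snd (PhiR U U') (kC x U')) (fst (PhiR U U') (ga x U')) (fst (PhiR U U') (fst x U'))"
    using fun_arr[OF F kU'] .
  have aUU': "arr (Phi U) (snd x U U') (fst (PhiR U U') (fst x U')) (fst x U)" using Qc.lo_arr[OF x UQ] .
  have L: "Cmp (Phi U) (Cmp (Phi U) (kC x U) (aG x U U')) (snd (PhiR U U') (gg x U' W)) = snd x U W"
  proof -
    have "Cmp (Phi U) (Cmp (Phi U) (kC x U) (aG x U U')) (snd (PhiR U U') (gg x U' W))
        = Cmp (Phi U) (kC x U) (Cmp (Phi U) (aG x U U') (snd (PhiR U U') (gg x U' W)))"
      using cat_assoc[OF c gam aG kU] by simp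
    also have "\<dots> = Cmp (Phi U) (kC x U) (gg x U W)" using aG_prop(2)[OF x U W] by simp
    also have "\<dots> = snd x U W" using kC_prop(2)[OF x UQ(1) W1] .
    finally show ?thesis .
  qed
  have R: "Cmp (Phi U) (Cmp (Phi U) (snd x U U') (snd (PhiR U U') (kC x U'))) (snd (PhiR U U') (gg x U' W)) = snd x U W"
  proof -
    have "Cmp (Phi U) (Cmp (Phi U) (snd x U U') (snd (PhiR U U') (kC x U'))) (snd (PhiR U U') (gg x U' W))
        = Cmp (Phi U) (snd x U U') (Cmp (Phi U) (snd (PhiR U U') (kC x U')) (snd (PhiR U U') (gg x U' W)))"
      using cat_assoc[OF c gam PkU' aUU'] by simp
    also have "Cmp (Phi U) (snd (PhiR U U') (kC x U')) (snd (PhiR U U') (gg x U' W))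
        = snd (PhiR U U') (Cmp (Phi U') (kC x U') (gg x U' W))"
      using fun_comp[OF F gU'W kU'] by simp
    also have "Cmp (Phi U') (kC x U') (gg x U' W) = snd x U' W" using kC_prop(2)[OF x UQ(2) W] .
    also have "Cmp (Phi U) (snd x U U') (snd (PhiR U U') (snd x U' W)) = snd x U W"
      using Qc.lo_coc[OF x UQ(1,2) w(2) UQ(3) w(1)] by simp
    finally show ?thesis .
  qed
  have e: "Cmp (Phi U) (kC x U) (aG x U U') = Cmp (Phi U) (snd x U U') (snd (PhiR U U') (kC x U'))"
    using cancel_r[OF g gam cat_comp[OF c aG kU] cat_comp[OF c PkU' aUU']] L R by simp
  show "Cmp (Phi U) (snd (snd (eps x)) U) (snd (fst (eps x)) U U') =
          Cmp (Phi U) (snd (fst (snd (eps x))) U U') (snd (PhiR U U') (snd (snd (eps x)) U'))"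
    using e UQ U by (simp add: eps_def Gobj_simps restr_simps)
next
  fix U assume "U \<notin> Q" then show "snd (snd (eps x)) U = undefined" by (simp add: eps_def)
qed

end


context main
begin

lemma eta_nat_iso: "nat_iso TP TP id_ftor (comp_ftor Gf (restr_ftor Q)) eta"
proof -
  have F1: "is_functor TP TP id_ftor" using id_ftor_functor[OF T_category] .
  have F2: "is_functor TP TP (comp_ftor Gf (restr_ftor Q))"
    using comp_ftor_functor[OF restr_functor[OF Q_sub] G_functor] .
  have ob: "iso_arr TP (eta y) \<and> Dom TP (eta y) = fst id_ftor y \<and> Cod TP (eta y) = fst (comp_ftor Gf (restr_ftor Q)) y"
    if yo: "y \<in> Ob TP" for y
  proof -
    have y: "lim_obj P Phi PhiR y" using yo by (simp add: T_simps)
    have "eta y \<in> Ar TP" using eta_la[OF y] by (simp add: T_simps)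
    then have "iso_arr TP (eta y)" using T_groupoid unfolding groupoid_def by blast
    then show ?thesis by (simp add: T_simps eta_def id_ftor_def comp_ftor_def restr_simps)
  qed
  have nat: "Cmp TP (eta (Cod TP f)) (snd id_ftor f) = Cmp TP (snd (comp_ftor Gf (restr_ftor Q)) f) (eta (Dom TP f))"
    if fa: "f \<in> Ar TP" for f
  proof -
    have f: "lim_arr P Phi PhiR f" using fa by (simp add: T_simps)
    define y where "y = fst f"
    define z where "z = fst (snd f)"
    define p where "p = snd (snd f)"
    define Ff where "Ff = snd (restr_ftor Q) f"
    have y: "lim_obj P Phi PhiR y" and z: "lim_obj P Phi PhiR z" using la_o1[OF f] la_o2[OF f] y_def z_def by auto
    have Ffl: "lim_arr Q Phi PhiR Ff" using restr_la[OF Q_sub f] Ff_def by simp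
    have Ff1: "fst Ff = restr_obj Q y" "fst (snd Ff) = restr_obj Q z" "\<And>V. V \<in> Q \<Longrightarrow> snd (snd Ff) V = p V"
      by (simp_all add: Ff_def y_def z_def p_def restr_simps)
    have ry: "lim_obj Q Phi PhiR (restr_obj Q y)" and rz: "lim_obj Q Phi PhiR (restr_obj Q z)"
      using restr_Q_lo[OF y] restr_Q_lo[OF z] .
    have comp: "Cmp (Phi U) (eC z U) (p U) = Cmp (Phi U) (gG Ff U) (eC y U)" if U: "U \<in> P" for U
    proof -
      have g: "groupoid (Phi U)" and c: "category (Phi U)" using gpd[OF U] cat[OF U] .
      obtain cc where V: "N - {cc} \<in> QU U" using QU_ne[OF U] by blast
      define W where "W = N - {cc}"
      have W: "W \<in> QU U" using V W_def by simp
      have w: "U \<subseteq> W" "W \<in> P" "W \<in> Q" using QU_sub[OF U W] by auto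
      have aW: "arr (Phi U) (snd y U W) (sb (restr_obj Q y) U W) (fst y U)"
        using lo_arr[OF y U w(2) w(1)] w(3) by (simp add: sb_def restr_simps)
      have pU: "arr (Phi U) (p U) (fst y U) (fst z U)" using la_arr[OF f U] y_def z_def p_def by simp
      have pW: "arr (Phi W) (p W) (fst y W) (fst z W)" using la_arr[OF f w(2)] y_def z_def p_def by simp
      have PpW: "arr (Phi U) (snd (PhiR U W) (p W)) (sb (restr_obj Q y) U W) (sb (restr_obj Q z) U W)"
        using fun_arr[OF rfun[OF U w(2) w(1)] pW] w(3) by (simp add: sb_def restr_simps)
      have azW: "arr (Phi U) (snd z U W) (sb (restr_obj Q z) U W) (fst z U)"
        using lo_arr[OF z U w(2) w(1)] w(3) by (simp add: sb_def restr_simps)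
      have ez: "arr (Phi U) (eC z U) (fst z U) (ga (restr_obj Q z) U)" using eC_prop(1)[OF z U] .
      have ey: "arr (Phi U) (eC y U) (fst y U) (ga (restr_obj Q y) U)" using eC_prop(1)[OF y U] .
      have gGa: "arr (Phi U) (gG Ff U) (ga (restr_obj Q y) U) (ga (restr_obj Q z) U)"
        using gG_prop(1)[OF Ffl U] Ff1 by simp
      have L: "Cmp (Phi U) (Cmp (Phi U) (eC z U) (p U)) (snd y U W) = Cmp (Phi U) (gg (restr_obj Q z) U W) (snd (PhiR U W) (p W))"
      proof -
        have "Cmp (Phi U) (Cmp (Phi U) (eC z U) (p U)) (snd y U W) = Cmp (Phi U) (eC z U) (Cmp (Phi U) (p U) (snd y U W))"
          using cat_assoc[OF c aW pU ez] by simp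
        also have "Cmp (Phi U) (p U) (snd y U W) = Cmp (Phi U) (snd z U W) (snd (PhiR U W) (p W))"
          using la_nat[OF f U w(2) w(1)] y_def z_def p_def by simp
        also have "Cmp (Phi U) (eC z U) (Cmp (Phi U) (snd z U W) (snd (PhiR U W) (p W)))
            = Cmp (Phi U) (Cmp (Phi U) (eC z U) (snd z U W)) (snd (PhiR U W) (p W))"
          using cat_assoc[OF c PpW azW ez] by simp
        also have "Cmp (Phi U) (eC z U) (snd z U W) = gg (restr_obj Q z) U W" using eC_prop(2)[OF z U W] .
        finally show ?thesis .
      qed
      have R: "Cmp (Phi U) (Cmp (Phi U) (gG Ff U) (eC y U)) (snd y U W) = Cmp (Phi U) (gg (restr_obj Q z) U W) (snd (PhiR U W) (p W))"
      proof -
        have "Cmp (Phi U) (Cmp (Phi U) (gG Ff U) (eC y U)) (snd y U W) = Cmp (Phi U) (gG Ff U) (Cmp (Phi U) (eC y U) (snd y U W))"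
          using cat_assoc[OF c aW ey gGa] by simp
        also have "Cmp (Phi U) (eC y U) (snd y U W) = gg (restr_obj Q y) U W" using eC_prop(2)[OF y U W] .
        also have "Cmp (Phi U) (gG Ff U) (gg (restr_obj Q y) U W) = Cmp (Phi U) (gg (restr_obj Q z) U W) (snd (PhiR U W) (p W))"
          using gG_prop(2)[OF Ffl U W] Ff1 w(3) by simp
        finally show ?thesis .
      qed
      show ?thesis using cancel_r[OF g aW cat_comp[OF c pU ez] cat_comp[OF c ey gGa]] L R by simp
    qed
    have pu: "\<And>U. U \<notin> P \<Longrightarrow> p U = undefined" using la_u[OF f] p_def by simp
    show ?thesis
      using comp unfolding T_simps
      by (auto simp: eta_def id_ftor_def comp_ftor_def Garr_def Ff_def[symmetric] y_def[symmetric]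
          z_def[symmetric] p_def[symmetric] Ff1 intro!: ext)
  qed
  show ?thesis unfolding nat_iso_def using F1 F2 ob nat by blast
qed

lemma eps_nat_iso: "nat_iso TQ TQ (comp_ftor (restr_ftor Q) Gf) id_ftor eps"
proof -
  have F1: "is_functor TQ TQ id_ftor" using id_ftor_functor[OF Qc.T_category] .
  have F2: "is_functor TQ TQ (comp_ftor (restr_ftor Q) Gf)"
    using comp_ftor_functor[OF G_functor restr_functor[OF Q_sub]] .
  have ob: "iso_arr TQ (eps x) \<and> Dom TQ (eps x) = fst (comp_ftor (restr_ftor Q) Gf) x \<and> Cod TQ (eps x) = fst id_ftor x"
    if xo: "x \<in> Ob TQ" for x
  proof -
    have x: "lim_obj Q Phi PhiR x" using xo by (simp add: Qc.T_simps)
    have "eps x \<in> Ar TQ" using eps_la[OF x] by (simp add: Qc.T_simps)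
    then have "iso_arr TQ (eps x)" using Qc.T_groupoid unfolding groupoid_def by blast
    then show ?thesis by (simp add: Qc.T_simps eps_def id_ftor_def comp_ftor_def restr_simps)
  qed
  have nat: "Cmp TQ (eps (Cod TQ f)) (snd (comp_ftor (restr_ftor Q) Gf) f) = Cmp TQ (snd id_ftor f) (eps (Dom TQ f))"
    if fa: "f \<in> Ar TQ" for f
  proof -
    have f: "lim_arr Q Phi PhiR f" using fa by (simp add: Qc.T_simps)
    define x where "x = fst f"
    define x' where "x' = fst (snd f)"
    define p where "p = snd (snd f)"
    have x: "lim_obj Q Phi PhiR x" and x': "lim_obj Q Phi PhiR x'" using Qc.la_o1[OF f] Qc.la_o2[OF f] x_def x'_def by auto
    have comp: "Cmp (Phi U) (kC x' U) (gG f U) = Cmp (Phi U) (p U) (kC x U)" if UQ: "U \<in> Q" for U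
    proof -
      have U: "U \<in> P" using UQ Q_sub by auto
      have g: "groupoid (Phi U)" and c: "category (Phi U)" using gpd[OF U] cat[OF U] .
      obtain cc where V: "N - {cc} \<in> QU U" using QU_ne[OF U] by blast
      define W where "W = N - {cc}"
      have W: "W \<in> QU U" using V W_def by simp
      have w: "U \<subseteq> W" "W \<in> Q" using W QU_iff by auto
      have gxW: "arr (Phi U) (gg x U W) (sb x U W) (ga x U)" using triv_arr[OF gtriv[OF x U] W] .
      have gx'W: "arr (Phi U) (gg x' U W) (sb x' U W) (ga x' U)" using triv_arr[OF gtriv[OF x' U] W] .
      have pU: "arr (Phi U) (p U) (fst x U) (fst x' U)" using Qc.la_arr[OF f UQ] x_def x'_def p_def by simp
      have pW: "arr (Phi W) (p W) (fst x W) (fst x' W)" using Qc.la_arr[OF f w(2)] x_def x'_def p_def by simp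
      have PpW: "arr (Phi U) (snd (PhiR U W) (p W)) (sb x U W) (sb x' U W)"
        unfolding sb_def using fun_arr[OF rfun[OF U QU_P[OF W] w(1)] pW] .
      have kx: "arr (Phi U) (kC x U) (ga x U) (fst x U)" using kC_prop(1)[OF x UQ] .
      have kx': "arr (Phi U) (kC x' U) (ga x' U) (fst x' U)" using kC_prop(1)[OF x' UQ] .
      have gGa: "arr (Phi U) (gG f U) (ga x U) (ga x' U)" using gG_prop(1)[OF f U] x_def x'_def by simp
      have L: "Cmp (Phi U) (Cmp (Phi U) (kC x' U) (gG f U)) (gg x U W) = Cmp (Phi U) (snd x' U W) (snd (PhiR U W) (p W))"
      proof -
        have "Cmp (Phi U) (Cmp (Phi U) (kC x' U) (gG f U)) (gg x U W) = Cmp (Phi U) (kC x' U) (Cmp (Phi U) (gG f U) (gg x U W))"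
          using cat_assoc[OF c gxW gGa kx'] by simp
        also have "Cmp (Phi U) (gG f U) (gg x U W) = Cmp (Phi U) (gg x' U W) (snd (PhiR U W) (p W))"
          using gG_prop(2)[OF f U W] x_def x'_def p_def by simp
        also have "Cmp (Phi U) (kC x' U) (Cmp (Phi U) (gg x' U W) (snd (PhiR U W) (p W)))
            = Cmp (Phi U) (Cmp (Phi U) (kC x' U) (gg x' U W)) (snd (PhiR U W) (p W))"
          using cat_assoc[OF c PpW gx'W kx'] by simp
        also have "Cmp (Phi U) (kC x' U) (gg x' U W) = snd x' U W" using kC_prop(2)[OF x' UQ W] .
        finally show ?thesis .
      qed
      have R: "Cmp (Phi U) (Cmp (Phi U) (p U) (kC x U)) (gg x U W) = Cmp (Phi U) (snd x' U W) (snd (PhiR U W) (p W))"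
      proof -
        have "Cmp (Phi U) (Cmp (Phi U) (p U) (kC x U)) (gg x U W) = Cmp (Phi U) (p U) (Cmp (Phi U) (kC x U) (gg x U W))"
          using cat_assoc[OF c gxW kx pU] by simp
        also have "Cmp (Phi U) (kC x U) (gg x U W) = snd x U W" using kC_prop(2)[OF x UQ W] .
        also have "Cmp (Phi U) (p U) (snd x U W) = Cmp (Phi U) (snd x' U W) (snd (PhiR U W) (p W))"
          using Qc.la_nat[OF f UQ w(2) w(1)] x_def x'_def p_def by simp
        finally show ?thesis .
      qed
      show ?thesis using cancel_r[OF g gxW cat_comp[OF c gGa kx'] cat_comp[OF c kx pU]] L R by simp
    qed
    have QP: "\<And>U. U \<in> Q \<Longrightarrow> U \<in> P" using Q_sub by auto
    show ?thesis
      using comp QP unfolding Qc.T_simps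
      by (auto simp: eps_def id_ftor_def comp_ftor_def Garr_def restr_simps x_def[symmetric]
          x'_def[symmetric] p_def[symmetric] intro!: ext)
  qed
  show ?thesis unfolding nat_iso_def using F1 F2 ob nat by blast
qed

lemma final: "cat_equivalence TP TQ (restr_ftor Q)"
  unfolding cat_equivalence_def
  using restr_functor[OF Q_sub] G_functor eta_nat_iso eps_nat_iso by blast

end

theorem corollary5p2:
  fixes n :: nat
    and Phi :: "nat set \<Rightarrow> ('o,'m) cat"
    and PhiR :: "nat set \<Rightarrow> nat set \<Rightarrow> ('o,'m,'o,'m) ftor"
  assumes "n \<ge> 3"
    and "contra_gpd_functor (Bn n) Phi PhiR"
  shows "cat_equivalence (twolim (Bn n) Phi PhiR) (twolim (Bnk n (n - 3)) Phi PhiR)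
           (restr_ftor (Bnk n (n - 3)))"
proof -
  interpret M: main n Phi PhiR
    unfolding main_def main_axioms_def cgf_def using assms by blast
  show ?thesis using M.final .
qed


end
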